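(* Let $n\in\mathbb N$, let $K_1,\dots,K_n$ be singular kernel functions satisfying (PM$_c$) for some $c>0$, and let $J$ be an arbitrary $n$-field function. Then for each $\mathbf y\in Y$ there are an open neighbourhood $U\subseteq Y$ of $\mathbf y$ and an open neighbourhood $V$ of $\Phi(\mathbf y)$ such that $\Phi:U\to V$ is a bi-Lipschitz homeomorphism.
   Context: A kernel function is a function $K:(-1,0)\cup(0,1)\to\mathbb R$ that is concave on $(-1,0)$ and concave on $(0,1)$ and satisfies $\lim_{t\downarrow0}K(t)=\lim_{t\uparrow0}K(t)$. It is extended to $[-1,1]$ with values in $[-\infty,\infty)$ by its one-sided limits at $-1,0,1$. A kernel function is singular if $K(0)=-\infty$. For $c\ge0$, a kernel function satisfies (PM$_c$) if $K'(t)-K'(t-1)\ge c$ for almost every $t\in(0,1)$. An $n$-field function is a function $J:[0,1]\to[-\infty,\infty)$ that is bounded above and whose set of finite values has total weight strictly greater than $n$. Here the points $0$ and $1$ each have weight $1/2$ and every point of $(0,1)$ has weight $1$. $S=\{\mathbf y\in\mathbb R^n:0<y_1<\dots<y_n<1\}$. $F(\mathbf y,t)=J(t)+\sum_{i=1}^nK_i(t-y_i)$, with the convention $a+(-\infty)=-\infty$. Set $y_0:=0$ and $y_{n+1}:=1$. Let $I_j(\mathbf y)=[y_j,y_{j+1}]$ and $m_j(\mathbf y)=\sup_{t\in I_j(\mathbf y)}F(\mathbf y,t)$. $Y=\{\mathbf y\in S:m_j(\mathbf y)\neq-\infty\ \forall j\}$. $\Phi(\mathbf y)=(m_1(\mathbf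 y)-m_0(\mathbf y),\dots,m_n(\mathbf y)-m_{n-1}(\mathbf y))$. *)

theory Defs
  imports "HOL-Analysis.Analysis" "HOL-Library.Extended_Real"
begin

text \<open>Kernel functions are given by their values on (-1,0) and (0,1) (a real-valued
function on the reals whose values elsewhere are ignored); the extension to [-1,1]
with values in [-infinity, infinity) is by one-sided limits (in ereal).\<close>

definition kernel_function :: "(real \<Rightarrow> real) \<Rightarrow> bool" where
  "kernel_function K \<longleftrightarrow>
     concave_on {-1<..<0} K \<and> concave_on {0<..<1} K \<and>
     (\<exists>l::ereal. ((\<lambda>s. ereal (K s)) \<longlongrightarrow> l) (at_right 0) \<and>
                 ((\<lambda>s. ereal (K s)) \<longlongrightarrow> l) (at_left 0))"

definition Kext :: "(real \<Rightarrow> real) \<Rightarrow> real \<Rightarrow> ereal" where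
  "Kext K t =
     (if t \<in> {-1<..<0} \<union> {0<..<1} then ereal (K t)
      else if t = 0 then Lim (at_right 0) (\<lambda>s. ereal (K s))
      else if t = 1 then Lim (at_left 1) (\<lambda>s. ereal (K s))
      else if t = -1 then Lim (at_right (-1)) (\<lambda>s. ereal (K s))
      else -\<infinity>)"

definition singular_kernel :: "(real \<Rightarrow> real) \<Rightarrow> bool" where
  "singular_kernel K \<longleftrightarrow> kernel_function K \<and> Kext K 0 = -\<infinity>"

definition PM :: "real \<Rightarrow> (real \<Rightarrow> real) \<Rightarrow> bool" where
  "PM c K \<longleftrightarrow>
     (AE t in lborel. t \<in> {0<..<1} \<longrightarrow>
        (\<exists>d1 d2. (K has_real_derivative d1) (at t) \<and>
                 (K has_real_derivative d2) (at (t - 1)) \<and> d1 - d2 \<ge> c))"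

definition weight :: "real set \<Rightarrow> ereal" where
  "weight A =
     (if finite A then
        ereal (real (card (A \<inter> {0<..<1})) + (if 0 \<in> A then 1/2 else 0) + (if 1 \<in> A then 1/2 else 0))
      else \<infinity>)"

definition n_field :: "nat \<Rightarrow> (real \<Rightarrow> ereal) \<Rightarrow> bool" where
  "n_field n J \<longleftrightarrow>
     (\<exists>M::real. \<forall>t\<in>{0..1}. J t \<le> ereal M) \<and>
     weight {t \<in> {0..1}. J t \<noteq> -\<infinity>} > ereal (real n)"

text \<open>Points of R^n are indexed by a finite linearly ordered type 'n with n = CARD('n);
the j-th coordinate (1-based) is the one at the (j-1)-th index in increasing order.\<close>

definition idx :: "nat \<Rightarrow> 'n::{finite,linorder}" where
  "idx j = sorted_list_of_set (UNIV :: 'n set) ! j"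

definition pos :: "'n::{finite,linorder} \<Rightarrow> nat" where
  "pos i = card {k. k < i}"

definition S_set :: "(real ^ 'n::{finite,linorder}) set" where
  "S_set = {y. (\<forall>i. 0 < y $ i \<and> y $ i < 1) \<and> (\<forall>i j. i < j \<longrightarrow> y $ i < y $ j)}"

definition yext :: "real ^ 'n::{finite,linorder} \<Rightarrow> nat \<Rightarrow> real" where
  "yext y j = (if j = 0 then 0 else if j \<le> CARD('n) then y $ idx (j - 1) else 1)"

definition Ffun :: "(real \<Rightarrow> ereal) \<Rightarrow> ('n::{finite,linorder} \<Rightarrow> real \<Rightarrow> real)
                     \<Rightarrow> real ^ 'n::{finite,linorder} \<Rightarrow> real \<Rightarrow> ereal" where
  "Ffun J K y t = J t + (\<Sum>i\<in>UNIV. Kext (K i) (t - y $ i))"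

definition mval :: "(real \<Rightarrow> ereal) \<Rightarrow> ('n::{finite,linorder} \<Rightarrow> real \<Rightarrow> real)
                     \<Rightarrow> real ^ 'n::{finite,linorder} \<Rightarrow> nat \<Rightarrow> ereal" where
  "mval J K y j = (SUP t\<in>{yext y j .. yext y (j + 1)}. Ffun J K y t)"

definition Y_set :: "(real \<Rightarrow> ereal) \<Rightarrow> ('n::{finite,linorder} \<Rightarrow> real \<Rightarrow> real)
                     \<Rightarrow> (real ^ 'n::{finite,linorder}) set" where
  "Y_set J K = {y \<in> S_set. \<forall>j \<le> CARD('n). mval J K y j \<noteq> -\<infinity>}"

text \<open>Phi_j = m_j - m_{j-1}; the coordinate with index i is the (pos i + 1)-th.\<close>
definition Phi :: "(real \<Rightarrow> ereal) \<Rightarrow> ('n::{finite,linorder} \<Rightarrow> real \<Rightarrow> real)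
                     \<Rightarrow> real ^ 'n::{finite,linorder} \<Rightarrow> real ^ 'n::{finite,linorder}" where
  "Phi J K y = (\<chi> i. real_of_ereal (mval J K y (pos i + 1) - mval J K y (pos i)))"

end

theory Submission
  imports Defs "HOL-Homology.Invariance_of_Domain"
begin
lemma slope_flip: "(- f a - - f b) / (a - b) = - ((f b - f a) / (b - (a::real)))"
proof -
  have "- f a - - f b = f b - f a" "a - b = - (b - a)" by simp_all
  then show ?thesis by (simp only: divide_minus_right)
qed

lemma concave_slope_mono:
  fixes K :: "real \<Rightarrow> real"
  assumes cc: "concave_on I K"
    and I: "x1 \<in> I" "x2 \<in> I" "x1' \<in> I" "x2' \<in> I"
    and lt: "x1 < x2" "x1' < x2'" and le: "x1 \<le> x1'" "x2 \<le> x2'"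
  shows "(K x2' - K x1') / (x2' - x1') \<le> (K x2 - K x1) / (x2 - x1)"
proof -
  have cv: "convex_on I (\<lambda>x. - K x)" using cc by (simp add: concave_on_def)
  have A: "(K x2' - K x1) / (x2' - x1) \<le> (K x2 - K x1) / (x2 - x1)"
  proof (cases "x2 = x2'")
    case False
    then have "x2 < x2'" using le by auto
    from convex_on_slope_le(1)[OF cv I(1) I(4) lt(1) this]
    show ?thesis unfolding slope_flip by simp
  qed simp
  have B: "(K x2' - K x1') / (x2' - x1') \<le> (K x2' - K x1) / (x2' - x1)"
  proof (cases "x1 = x1'")
    case False
    then have "x1 < x1'" using le by auto
    from convex_on_slope_le(2)[OF cv I(1) I(4) this lt(2)]
    show ?thesis unfolding slope_flip by simp
  qed simp
  show ?thesis using A B by linarith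
qed

lemma concave_incr_mono:
  fixes K :: "real \<Rightarrow> real"
  assumes cc: "concave_on I K" and h: "h > 0" and uu: "u \<le> u'"
    and I: "u \<in> I" "u + h \<in> I" "u' \<in> I" "u' + h \<in> I"
  shows "K (u' + h) - K u' \<le> K (u + h) - K u"
proof -
  have "(K (u'+h) - K u') / (u' + h - u') \<le> (K (u+h) - K u) / (u + h - u)"
    by (rule concave_slope_mono[OF cc I(1) I(2) I(3) I(4)]) (use h uu in auto)
  then show ?thesis using h by (simp add: divide_le_cancel)
qed

lemma concave_bdd_above:
  fixes K :: "real \<Rightarrow> real"
  assumes cc: "concave_on {p<..<q} K" and pq: "p < q"
  shows "\<exists>M. \<forall>t\<in>{p<..<q}. K t \<le> M"
proof -
  define m0 where "m0 = (3*p+q)/4"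
  define m where "m = (p+q)/2"
  define m3 where "m3 = (p+3*q)/4"
  have mm: "m0 \<in> {p<..<q}" "m \<in> {p<..<q}" "m3 \<in> {p<..<q}" "m0 < m" "m < m3"
    using pq by (auto simp: m0_def m_def m3_def)
  define A where "A = (K m - K m0) / (m - m0)"
  define B where "B = (K m3 - K m) / (m3 - m)"
  have "K t \<le> \<bar>K m\<bar> + (\<bar>A\<bar> + \<bar>B\<bar>) * (q - p)" if t: "t \<in> {p<..<q}" for t
  proof (cases t m rule: linorder_cases)
    case less
    have "(K m3 - K m) / (m3 - m) \<le> (K m - K t) / (m - t)"
      by (rule concave_slope_mono[OF cc]) (use mm t less in auto)
    then have "B * (m - t) \<le> K m - K t" using less by (simp add: B_def le_divide_eq)
    moreover have "\<bar>B * (m - t)\<bar> \<le> \<bar>B\<bar> * (q - p)"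
    proof -
      have "\<bar>m - t\<bar> \<le> q - p" using t less mm by auto
      then show ?thesis by (simp add: abs_mult mult_left_mono)
    qed
    moreover have "0 \<le> \<bar>A\<bar> * (q - p)" using pq by auto
    ultimately show ?thesis
      using abs_ge_minus_self[of "B * (m - t)"] abs_ge_self[of "K m"] unfolding distrib_right by linarith
  next
    case equal
    have "0 \<le> (\<bar>A\<bar> + \<bar>B\<bar>) * (q - p)" using pq by simp
    then show ?thesis unfolding equal using abs_ge_self[of "K m"] by linarith
  next
    case greater
    have "(K t - K m) / (t - m) \<le> (K m - K m0) / (m - m0)"
      by (rule concave_slope_mono[OF cc]) (use mm t greater in auto)
    then have "K t - K m \<le> A * (t - m)" using greater by (simp add: A_def divide_le_eq)
    moreover have "\<bar>A * (t - m)\<bar> \<le> \<bar>A\<bar> * (q - p)"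
    proof -
      have "\<bar>t - m\<bar> \<le> q - p" using t greater mm by auto
      then show ?thesis by (simp add: abs_mult mult_left_mono)
    qed
    moreover have "0 \<le> \<bar>B\<bar> * (q - p)" using pq by auto
    ultimately show ?thesis
      using abs_ge_self[of "A * (t - m)"] abs_ge_self[of "K m"] unfolding distrib_right by linarith
  qed
  then show ?thesis by blast
qed

lemma concave_lipschitz:
  fixes K :: "real \<Rightarrow> real"
  assumes cc: "concave_on {p<..<q} K" and a: "p < \<alpha>" and b: "\<beta> < q"
  shows "\<exists>L\<ge>0. \<forall>x\<in>{\<alpha>..\<beta>}. \<forall>x'\<in>{\<alpha>..\<beta>}. \<bar>K x - K x'\<bar> \<le> L * \<bar>x - x'\<bar>"
proof (cases "\<alpha> \<le> \<beta>")
  case False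
  then show ?thesis by auto
next
  case True
  define p' where "p' = (p + \<alpha>)/2"
  define q' where "q' = (\<beta> + q)/2"
  have pp: "p < p'" "p' < \<alpha>" "\<beta> < q'" "q' < q" using a b by (auto simp: p'_def q'_def)
  define A where "A = (K \<alpha> - K p') / (\<alpha> - p')"
  define B where "B = (K q' - K \<beta>) / (q' - \<beta>)"
  have main: "\<bar>K x' - K x\<bar> \<le> (\<bar>A\<bar> + \<bar>B\<bar>) * \<bar>x' - x\<bar>"
    if x: "\<alpha> \<le> x" "x < x'" "x' \<le> \<beta>" for x x'
  proof -
    have s1: "(K x' - K x) / (x' - x) \<le> A"
    proof -
      have "(K x' - K x) / (x' - x) \<le> (K x - K p') / (x - p')"
        by (rule concave_slope_mono[OF cc]) (use pp x True in auto)
      also have "\<dots> \<le> A" unfolding A_def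
        by (rule concave_slope_mono[OF cc]) (use pp x True in auto)
      finally show ?thesis .
    qed
    have s2: "B \<le> (K x' - K x) / (x' - x)"
    proof -
      have "B \<le> (K q' - K x') / (q' - x')" unfolding B_def
        by (rule concave_slope_mono[OF cc]) (use pp x True in auto)
      also have "\<dots> \<le> (K x' - K x) / (x' - x)"
        by (rule concave_slope_mono[OF cc]) (use pp x True in auto)
      finally show ?thesis .
    qed
    have "\<bar>(K x' - K x) / (x' - x)\<bar> \<le> \<bar>A\<bar> + \<bar>B\<bar>" using s1 s2 by linarith
    then have "\<bar>K x' - K x\<bar> / \<bar>x' - x\<bar> \<le> \<bar>A\<bar> + \<bar>B\<bar>" by (simp add: abs_divide)
    then show ?thesis using x by (simp add: divide_le_eq)
  qed
  have H: "\<forall>x\<in>{\<alpha>..\<beta>}. \<forall>x'\<in>{\<alpha>..\<beta>}. \<bar>K x - K x'\<bar> \<le> (\<bar>A\<bar> + \<bar>B\<bar>) * \<bar>x - x'\<bar>"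
  proof (intro ballI)
    fix x x' assume that: "x\<in>{\<alpha>..\<beta>}" "x'\<in>{\<alpha>..\<beta>}"
    show "\<bar>K x - K x'\<bar> \<le> (\<bar>A\<bar> + \<bar>B\<bar>) * \<bar>x - x'\<bar>"
    proof (cases x x' rule: linorder_cases)
      case less then show ?thesis using main[of x x'] that abs_minus_commute by (metis atLeastAtMost_iff)
    next
      case greater then show ?thesis using main[of x' x] that abs_minus_commute by (metis atLeastAtMost_iff)
    qed simp
  qed
  show ?thesis by (rule exI[where x="\<bar>A\<bar> + \<bar>B\<bar>"], rule conjI[OF _ H]) simp
qed

lemma concave_tangent:
  fixes K :: "real \<Rightarrow> real"
  assumes cc: "concave_on {p<..<q} K" and qq: "z \<in> {p<..<q}" and x: "x \<in> {p<..<q}"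
    and d: "(K has_real_derivative d) (at z)"
  shows "K x \<le> K z + d * (x - z)"
proof -
  have cv: "convex_on {p<..<q} (\<lambda>x. - K x)" using cc by (simp add: concave_on_def)
  have "((\<lambda>x. - K x) has_real_derivative - d) (at z within {p<..<q})"
    by (rule has_field_derivative_at_within, rule DERIV_minus, rule d)
  from convex_on_imp_above_tangent[OF cv _ _ x this] qq
  show ?thesis by (simp add: algebra_simps)
qed

lemma concave_cont:
  fixes K :: "real \<Rightarrow> real"
  assumes cc: "concave_on {p<..<q} K"
  shows "continuous_on {p<..<q} K"
proof -
  have cv: "convex_on {p<..<q} (\<lambda>x. - K x)" using cc by (simp add: concave_on_def)
  have "continuous_on {p<..<q} (\<lambda>x. - K x)"
    by (rule convex_on_continuous[OF open_greaterThanLessThan cv])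
  from continuous_on_minus[OF this] show ?thesis by simp
qed

lemma pm_mono:
  fixes K :: "real \<Rightarrow> real"
  assumes cr: "concave_on {0<..<1} K" and cl: "concave_on {-1<..<0} K"
    and pm: "PM c K"
    and s: "0 < s1" "s1 < s2" "s2 < 1"
  shows "c * (s2 - s1) \<le> (K s2 - K s1) - (K (s2 - 1) - K (s1 - 1))"
proof -
  define good where "good q d \<longleftrightarrow> q \<in> {0<..<1::real} \<and> (K has_real_derivative d) (at (q - 1)) \<and>
      (\<exists>d1. (K has_real_derivative d1) (at q) \<and> d1 - d \<ge> c)" for q d
  define \<psi> where "\<psi> s = K s - K (s - 1) - c * s" for s
  have dense: "\<exists>q d. \<alpha> < q \<and> q < \<beta> \<and> good q d" if ab: "0 \<le> \<alpha>" "\<alpha> < \<beta>" "\<beta> \<le> 1" for \<alpha> \<beta>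
  proof (rule ccontr)
    assume nex: "\<not> ?thesis"
    from pm obtain N where N: "{x \<in> space lborel. \<not> (x \<in> {0<..<1} \<longrightarrow>
        (\<exists>d1 d2. (K has_real_derivative d1) (at x) \<and> (K has_real_derivative d2) (at (x - 1)) \<and> d1 - d2 \<ge> c))} \<subseteq> N"
      "emeasure lborel N = 0" "N \<in> sets lborel"
      unfolding PM_def by (erule AE_E)
    have "{\<alpha><..<\<beta>} \<subseteq> N"
    proof
      fix x assume x: "x \<in> {\<alpha><..<\<beta>}"
      have x01: "0 < x" "x < 1" using x ab by auto
      have "\<not> (\<exists>d1 d2. (K has_real_derivative d1) (at x) \<and> (K has_real_derivative d2) (at (x - 1)) \<and> d1 - d2 \<ge> c)"
      proof
        assume "\<exists>d1 d2. (K has_real_derivative d1) (at x) \<and> (K has_real_derivative d2) (at (x - 1)) \<and> d1 - d2 \<ge> c"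
        then obtain d1 d2 where "(K has_real_derivative d1) (at x)" "(K has_real_derivative d2) (at (x - 1))" "d1 - d2 \<ge> c"
          by blast
        then have "good x d2" unfolding good_def using x01 by auto
        then show False using nex x by auto
      qed
      then show "x \<in> N" using N(1) x ab by auto
    qed
    then have "emeasure lborel {\<alpha><..<\<beta>} \<le> emeasure lborel N" by (rule emeasure_mono) (use N in auto)
    then show False using N(2) ab by simp
  qed
  have step: "\<psi> q' - \<psi> q \<ge> - (q' - q) * (d - d') \<and> d' \<le> d"
    if g: "good q d" "good q' d'" and qq: "q < q'" for q q' d d'
  proof -
    from g(2) obtain d1' where d1': "(K has_real_derivative d1') (at q')" "d1' - d' \<ge> c"
      unfolding good_def by auto
    have q: "q \<in> {0<..<1}" "q' \<in> {0<..<1}" "q - 1 \<in> {-1<..<0}" "q' - 1 \<in> {-1<..<0}"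
      using g unfolding good_def by auto
    have dq: "(K has_real_derivative d) (at (q - 1))" "(K has_real_derivative d') (at (q' - 1))"
      using g unfolding good_def by auto
    have t1: "K q \<le> K q' + d1' * (q - q')" by (rule concave_tangent[OF cr q(2) q(1) d1'(1)])
    have t2: "K (q' - 1) \<le> K (q - 1) + d * ((q' - 1) - (q - 1))"
      by (rule concave_tangent[OF cl q(3) q(4) dq(1)])
    have t3: "K (q - 1) \<le> K (q' - 1) + d' * ((q - 1) - (q' - 1))"
      by (rule concave_tangent[OF cl q(4) q(3) dq(2)])
    have "0 \<le> (d - d') * (q' - q)" using t2 t3 by (simp add: algebra_simps)
    then have dd: "d' \<le> d" using qq by (simp add: zero_le_mult_iff)
    have "\<psi> q' - \<psi> q \<ge> (d1' - d - c) * (q' - q)"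
      using t1 t2 unfolding \<psi>_def by (simp add: algebra_simps)
    moreover have "(d1' - d - c) * (q' - q) \<ge> (d' - d) * (q' - q)"
      using d1'(2) qq by (intro mult_right_mono) auto
    ultimately show ?thesis using dd by (simp add: algebra_simps)
  qed
  have ind: "\<forall>q q' d d'. good q d \<longrightarrow> good q' d' \<longrightarrow> q < q' \<longrightarrow> q' - q < real m * h \<longrightarrow>
      \<psi> q' - \<psi> q \<ge> - h * (d - d')" if h: "h > 0" for h m
  proof (induction m)
    case 0
    then show ?case by auto
  next
    case (Suc m)
    show ?case
    proof (intro allI impI)
      fix q q' d d'
      assume g: "good q d" "good q' d'" and qq: "q < q'" and lt: "q' - q < real (Suc m) * h"
      show "\<psi> q' - \<psi> q \<ge> - h * (d - d')"
      proof (cases "q' - q < h")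
        case True
        from step[OF g qq] have "\<psi> q' - \<psi> q \<ge> - (q' - q) * (d - d')" "d' \<le> d" by auto
        moreover have "(q' - q) * (d - d') \<le> h * (d - d')"
          using True \<open>d' \<le> d\<close> by (intro mult_right_mono) auto
        ultimately show ?thesis by linarith
      next
        case False
        then have mpos: "real m * h > 0" using lt h by (simp add: algebra_simps) 
        have q01: "0 \<le> q" "q' \<le> 1" using g unfolding good_def by auto
        have a1: "max q (q' - real m * h) < min (q + h) q'"
          using qq mpos lt h by (auto simp: algebra_simps)
        have a2: "0 \<le> max q (q' - real m * h)" "min (q + h) q' \<le> 1" using q01 by auto
        obtain r dr where r: "max q (q' - real m * h) < r" "r < min (q + h) q'" "good r dr"
          using dense[OF a2(1) a1 a2(2)] by blast
        have IH: "\<psi> q' - \<psi> r \<ge> - h * (dr - d')"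
          using Suc.IH r g by auto
        from step[OF g(1) r(3)] r have s1: "\<psi> r - \<psi> q \<ge> - (r - q) * (d - dr)" "dr \<le> d" by auto
        have "(r - q) * (d - dr) \<le> h * (d - dr)"
          using r \<open>dr \<le> d\<close> by (intro mult_right_mono) auto
        then show ?thesis using IH s1 by (simp add: algebra_simps)
      qed
    qed
  qed
  have goodmono: "\<psi> q \<le> \<psi> q'" if g: "good q d" "good q' d'" and qq: "q < q'" for q q' d d'
  proof (rule ccontr)
    assume "\<not> ?thesis"
    then have neg: "\<psi> q' < \<psi> q" by simp
    have dd: "d' \<le> d" using step[OF g qq] by auto
    define h where "h = (\<psi> q - \<psi> q') / (2 * (d - d' + 1))"
    have h: "h > 0" using neg dd by (simp add: h_def)
    obtain m :: nat where m: "(q' - q) / h < real m" using reals_Archimedean2 by blast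
    have "q' - q < real m * h" using m h by (simp add: divide_less_eq mult.commute)
    then have "\<psi> q' - \<psi> q \<ge> - h * (d - d')" using ind[OF h, of m] g qq by blast
    moreover have "h * (d - d') < \<psi> q - \<psi> q'"
    proof -
      have "h * (d - d') \<le> h * (d - d' + 1)" using h by simp
      also have "\<dots> = (\<psi> q - \<psi> q') / 2"
      proof -
        have nz: "d - d' + 1 \<noteq> 0" using dd by simp
        show ?thesis unfolding h_def times_divide_eq_left by (rule nonzero_mult_divide_mult_cancel_right[OF nz])
      qed
      finally have "h * (d - d') \<le> (\<psi> q - \<psi> q') / 2" .
      moreover have "(\<psi> q - \<psi> q') / 2 < \<psi> q - \<psi> q'" using neg by simp
      ultimately show ?thesis by linarith
    qed
    ultimately show False by linarith
  qed
  have contK: "continuous_on {0<..<1} K" "continuous_on {-1<..<0} K"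
    using concave_cont[OF cr] concave_cont[OF cl] by auto
  have cont\<psi>: "isCont \<psi> s" if "s \<in> {0<..<1}" for s
  proof -
    have "isCont K s" using contK(1) that by (simp add: continuous_on_eq_continuous_at)
    moreover have "isCont K (s - 1)" using contK(2) that by (simp add: continuous_on_eq_continuous_at)
    then have "isCont (\<lambda>x. K (x - 1)) s"
      by (intro continuous_at_compose[of s "\<lambda>x. x - 1" K, unfolded o_def]) (auto intro!: continuous_intros)
    ultimately show ?thesis unfolding \<psi>_def by (intro continuous_intros)
  qed
  have "\<psi> s1 \<le> \<psi> s2"
  proof (rule ccontr)
    assume "\<not> ?thesis"
    define e where "e = (\<psi> s1 - \<psi> s2) / 2"
    have e: "e > 0" using \<open>\<not> \<psi> s1 \<le> \<psi> s2\<close> by (simp add: e_def)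
    obtain d1 where d1: "d1 > 0" "\<And>x. dist x s1 < d1 \<Longrightarrow> dist (\<psi> x) (\<psi> s1) < e"
      using cont\<psi>[of s1] s e unfolding continuous_at_eps_delta by force
    obtain d2 where d2: "d2 > 0" "\<And>x. dist x s2 < d2 \<Longrightarrow> dist (\<psi> x) (\<psi> s2) < e"
      using cont\<psi>[of s2] s e unfolding continuous_at_eps_delta by force
    define w where "w = min (min d1 d2) ((s2 - s1) / 2)"
    have w1: "w > 0" unfolding w_def using d1 d2 s by simp
    have w2: "w \<le> d1" unfolding w_def by (rule min.coboundedI1, rule min.cobounded1)
    have w3: "w \<le> d2" unfolding w_def by (rule min.coboundedI1, rule min.cobounded2)
    have w4: "w \<le> (s2 - s1)/2" unfolding w_def by (rule min.cobounded2)
    have w5: "2 * w \<le> s2 - s1" using w4 by simp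
    note w = w1 w2 w3 w5
    obtain q d where q: "s1 < q" "q < s1 + w" "good q d" using dense[of s1 "s1 + w"] s w by auto
    obtain q' d' where q': "s2 - w < q'" "q' < s2" "good q' d'" using dense[of "s2 - w" s2] s w by auto
    have "q < q'" using q q' w by linarith
    then have "\<psi> q \<le> \<psi> q'" using goodmono q q' by blast
    moreover have "dist (\<psi> q) (\<psi> s1) < e" using d1(2)[of q] q w by (simp add: dist_real_def)
    moreover have "dist (\<psi> q') (\<psi> s2) < e" using d2(2)[of q'] q' w by (simp add: dist_real_def)
    moreover have e2: "\<psi> s1 - \<psi> s2 = 2 * e" by (simp add: e_def)
    ultimately show False unfolding dist_real_def by linarith
  qed
  then show ?thesis unfolding \<psi>_def by (simp add: algebra_simps)
qed

lemma idx_facts: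
  shows "length (sorted_list_of_set (UNIV::'n::{finite,linorder} set)) = CARD('n)"
    and "sorted_wrt (<) (sorted_list_of_set (UNIV::'n::{finite,linorder} set))"
    and "set (sorted_list_of_set (UNIV::'n::{finite,linorder} set)) = UNIV"
  by (auto simp: length_sorted_list_of_set strict_sorted_list_of_set set_sorted_list_of_set)

lemma idx_less:
  assumes "k < k'" "k' < CARD('n::{finite,linorder})"
  shows "(idx k :: 'n) < idx k'"
  unfolding idx_def using sorted_wrt_nth_less[OF idx_facts(2) assms(1)] assms idx_facts(1) by auto

lemma idx_surj: "\<exists>k < CARD('n::{finite,linorder}). idx k = (i::'n)"
proof -
  have "i \<in> set (sorted_list_of_set (UNIV::'n set))" using idx_facts(3) by auto
  then show ?thesis unfolding idx_def in_set_conv_nth idx_facts(1) by auto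
qed

lemma idx_less_iff:
  assumes "k < CARD('n::{finite,linorder})" "k' < CARD('n)"
  shows "(idx k :: 'n) < idx k' \<longleftrightarrow> k < k'"
proof -
  have "(idx k :: 'n) < idx k'" if "k < k'" using idx_less[OF that assms(2)] .
  moreover have "(idx k' :: 'n) < idx k" if "k' < k" using idx_less[OF that assms(1)] .
  ultimately show ?thesis by (cases k k' rule: linorder_cases) auto
qed

lemma pos_idx:
  assumes k: "k < CARD('n::{finite,linorder})"
  shows "pos (idx k :: 'n) = k"
proof -
  have "{i::'n. i < idx k} = idx ` {..<k}"
  proof
    show "{i::'n. i < idx k} \<subseteq> idx ` {..<k}"
    proof
      fix i :: 'n assume "i \<in> {i. i < idx k}"
      then have lt: "i < idx k" by simp
      obtain m where m: "m < CARD('n)" "idx m = i" using idx_surj by blast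
      then have "m < k" using idx_less_iff[OF m(1) k] lt by simp
      then show "i \<in> idx ` {..<k}" using m by auto
    qed
    show "idx ` {..<k} \<subseteq> {i::'n. i < idx k}" using idx_less k by auto
  qed
  moreover have "inj_on (idx :: nat \<Rightarrow> 'n) {..<k}"
    by (rule inj_onI) (metis idx_less_iff k lessThan_iff less_trans not_less_iff_gr_or_eq)
  ultimately show ?thesis unfolding pos_def by (simp add: card_image)
qed

lemma pos_lt: "pos (i::'n::{finite,linorder}) < CARD('n)"
  using idx_surj[of i] pos_idx by metis

lemma idx_pos: "idx (pos (i::'n::{finite,linorder})) = i"
  using idx_surj[of i] pos_idx by metis

lemma pos_less_iff: "pos (i::'n::{finite,linorder}) < pos j \<longleftrightarrow> i < j"
  by (metis idx_less_iff idx_pos pos_lt)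

lemma pos_inj: "pos (i::'n::{finite,linorder}) = pos j \<longleftrightarrow> i = j"
  by (metis idx_pos)

lemma bij_pos: "bij_betw (pos :: 'n::{finite,linorder} \<Rightarrow> nat) UNIV {..<CARD('n)}"
  unfolding bij_betw_def
proof
  show "inj (pos :: 'n \<Rightarrow> nat)" by (meson injI pos_inj)
  show "range (pos :: 'n \<Rightarrow> nat) = {..<CARD('n)}"
  proof
    show "range (pos :: 'n \<Rightarrow> nat) \<subseteq> {..<CARD('n)}" using pos_lt by auto
    show "{..<CARD('n)} \<subseteq> range (pos :: 'n \<Rightarrow> nat)"
    proof
      fix k assume "k \<in> {..<CARD('n)}"
      then have "pos (idx k :: 'n) = k" by (simp add: pos_idx)
      then show "k \<in> range (pos :: 'n \<Rightarrow> nat)" by (metis rangeI)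
    qed
  qed
qed

lemma sum_pos: "(\<Sum>k<CARD('n::{finite,linorder}). f k) = (\<Sum>i\<in>UNIV. f (pos (i::'n)))"
proof -
  have "bij_betw (pos::'n \<Rightarrow> nat) UNIV {..<CARD('n)}" by (rule bij_pos)
  from sum.reindex_bij_betw[OF this, of f] show ?thesis by simp
qed

lemma telescope_pos:
  fixes f :: "nat \<Rightarrow> 'a::ab_group_add"
  shows "(\<Sum>i\<in>(UNIV::'n::{finite,linorder} set). f (pos i + 1) - f (pos i)) = f (CARD('n)) - f 0"
proof -
  have "(\<Sum>k<CARD('n). f (Suc k) - f k) = (\<Sum>i\<in>(UNIV::'n set). f (Suc (pos i)) - f (pos i))"
    by (rule sum_pos)
  then show ?thesis by (simp add: sum_lessThan_telescope)
qed

lemma yext_pos: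
  fixes y :: "real ^ 'n::{finite,linorder}"
  shows "yext y (pos i + 1) = y $ i"
  unfolding yext_def using pos_lt[of i] idx_pos[of i] by auto

lemma yext_mono:
  fixes y :: "real ^ 'n::{finite,linorder}"
  assumes y: "y \<in> S_set" and kk: "k < k'" "k' \<le> CARD('n) + 1"
  shows "yext y k < yext y k'"
proof -
  have y01: "\<And>i. 0 < y $ i \<and> y $ i < 1" and ym: "\<And>i j. i < j \<Longrightarrow> y $ i < y $ j"
    using y unfolding S_set_def by auto
  show ?thesis
  proof (cases "k = 0")
    case True
    then show ?thesis using kk y01 unfolding yext_def by auto
  next
    case False
    show ?thesis
    proof (cases "k' = CARD('n) + 1")
      case True
      then show ?thesis using kk y01 False unfolding yext_def by auto
    next
      case False2: False
      have "idx (k - 1) < (idx (k' - 1) :: 'n)" using kk False False2 by (intro idx_less) auto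
      then show ?thesis using kk False False2 ym unfolding yext_def by auto
    qed
  qed
qed

lemma yext_le:
  fixes y :: "real ^ 'n::{finite,linorder}"
  assumes y: "y \<in> S_set" and kk: "k \<le> k'" "k' \<le> CARD('n) + 1"
  shows "yext y k \<le> yext y k'"
  using yext_mono[OF y, of k k'] kk by (cases "k = k'") auto

lemma yext_range:
  fixes y :: "real ^ 'n::{finite,linorder}"
  assumes y: "y \<in> S_set" and k: "k \<le> CARD('n) + 1"
  shows "0 \<le> yext y k" "yext y k \<le> 1"
  using yext_le[OF y, of 0 k] yext_le[OF y, of k "CARD('n)+1"] k by (auto simp: yext_def)

lemma sum_minf:
  fixes f :: "'a \<Rightarrow> ereal"
  assumes A: "finite A" "i0 \<in> A" and f0: "f i0 = -\<infinity>" and nf: "\<forall>i\<in>A. f i \<noteq> \<infinity>"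
  shows "sum f A = -\<infinity>"
proof -
  have "sum f A = f i0 + sum f (A - {i0})" using A by (simp add: sum.remove)
  moreover have "sum f (A - {i0}) \<noteq> \<infinity>" using nf by (simp add: sum_Pinfty)
  ultimately show ?thesis using f0 by simp
qed

definition Om :: "real set" where "Om = {-1<..<0} \<union> {0<..<1}"

lemma Om_open: "open Om" unfolding Om_def by auto

lemma Kext_Om: "s \<in> Om \<Longrightarrow> Kext K s = ereal (K s)"
  unfolding Kext_def Om_def by auto

lemma Om_iff: "s \<in> Om \<longleftrightarrow> -1 < s \<and> s < 1 \<and> s \<noteq> 0"
  unfolding Om_def by auto

locale base =
  fixes K :: "'n::{finite,linorder} \<Rightarrow> real \<Rightarrow> real" and J :: "real \<Rightarrow> ereal"
    and c :: real and y :: "real ^ 'n::{finite,linorder}" and MJ MK :: real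
  assumes c: "c > 0"
    and ker: "\<And>i. kernel_function (K i) \<and> singular_kernel (K i) \<and> PM c (K i)"
    and yY: "y \<in> Y_set J K"
    and MJ: "\<And>t. t \<in> {0..1} \<Longrightarrow> J t \<le> ereal MJ"
    and MK0: "MK \<ge> 0" and MK: "\<And>i s. s \<in> Om \<Longrightarrow> K i s \<le> MK"
begin

lemma cr: "concave_on {0<..<1} (K i)" and cl: "concave_on {-1<..<0} (K i)"
  using ker[of i] unfolding kernel_function_def by auto

lemma pmK: "PM c (K i)" using ker by auto

lemma Kcont: "continuous_on Om (K i)"
  unfolding Om_def using concave_cont[OF cr[of i]] concave_cont[OF cl[of i]]
  by (intro continuous_on_open_Un) auto

lemma isContK: "s \<in> Om \<Longrightarrow> isCont (K i) s"
  using Kcont[of i] Om_open by (simp add: continuous_on_eq_continuous_at)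

lemma Kext0: "Kext (K i) 0 = -\<infinity>"
  using ker[of i] unfolding singular_kernel_def by auto

lemma Klim: "\<exists>\<rho>>0. \<forall>i s. s \<noteq> 0 \<and> \<bar>s\<bar> < \<rho> \<longrightarrow> K i s < R"
proof -
  have ev: "eventually (\<lambda>s. K i s < R) (at 0)" for i
  proof -
    obtain l where l: "((\<lambda>s. ereal (K i s)) \<longlongrightarrow> l) (at_right 0)" "((\<lambda>s. ereal (K i s)) \<longlongrightarrow> l) (at_left 0)"
      using ker[of i] unfolding kernel_function_def by auto
    have "Kext (K i) 0 = Lim (at_right 0) (\<lambda>s. ereal (K i s))" unfolding Kext_def by simp
    also have "\<dots> = l" by (rule tendsto_Lim[OF _ l(1)]) simp
    finally have "l = -\<infinity>" using Kext0 by simp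
    then have l1: "((\<lambda>s. ereal (K i s)) \<longlongrightarrow> -\<infinity>) (at_right 0)"
      and l2: "((\<lambda>s. ereal (K i s)) \<longlongrightarrow> -\<infinity>) (at_left 0)" using l by auto
    have "eventually (\<lambda>s. ereal (K i s) < ereal R) (at_right 0)"
      using l1 unfolding tendsto_MInfty by blast
    moreover have "eventually (\<lambda>s. ereal (K i s) < ereal R) (at_left 0)"
      using l2 unfolding tendsto_MInfty by blast
    ultimately show ?thesis unfolding eventually_at_split by simp
  qed
  have "eventually (\<lambda>s. \<forall>i. K i s < R) (at 0)"
    by (rule eventually_all_finite) (rule ev)
  then obtain d where d: "d > 0" "\<And>s. s \<noteq> 0 \<Longrightarrow> dist s 0 < d \<Longrightarrow> \<forall>i. K i s < R"
    unfolding eventually_at by auto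
  show ?thesis using d by (intro exI[of _ d]) auto
qed

lemma S_range: "a \<in> S_set \<Longrightarrow> 0 < a $ i \<and> a $ i < 1"
  unfolding S_set_def by auto

lemma diff_cases:
  assumes a: "a \<in> S_set" and t: "t \<in> {0..1}"
  shows "t - a $ i \<in> Om \<or> t = a $ i"
  using S_range[OF a, of i] t unfolding Om_iff by auto

lemma Kext_not_inf:
  assumes a: "a \<in> S_set" and t: "t \<in> {0..1}"
  shows "Kext (K i) (t - a $ i) \<noteq> \<infinity>"
  using diff_cases[OF a t, of i] Kext_Om[of "t - a $ i" "K i"] Kext0[of i] by auto

lemma F_eq:
  assumes a: "a \<in> S_set" and t: "t \<in> {0..1}" and ne: "\<forall>i. t \<noteq> a $ i"
  shows "Ffun J K a t = J t + ereal (\<Sum>i\<in>UNIV. K i (t - a $ i))"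
proof -
  have "\<And>i. Kext (K i) (t - a $ i) = ereal (K i (t - a $ i))"
    using diff_cases[OF a t] ne Kext_Om by blast
  then show ?thesis unfolding Ffun_def by simp
qed

lemma J_not_inf: "t \<in> {0..1} \<Longrightarrow> J t \<noteq> \<infinity>"
  using MJ[of t] by auto

lemma F_minf:
  assumes a: "a \<in> S_set" and t: "t \<in> {0..1}" and eq: "t = a $ i0"
  shows "Ffun J K a t = -\<infinity>"
proof -
  have "(\<Sum>i\<in>UNIV. Kext (K i) (t - a $ i)) = -\<infinity>"
    by (rule sum_minf[of UNIV i0]) (use eq Kext0 Kext_not_inf[OF a t] in auto)
  then show ?thesis unfolding Ffun_def using J_not_inf[OF t] by simp
qed

lemma F_le:
  assumes a: "a \<in> S_set" and t: "t \<in> {0..1}"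
  shows "Ffun J K a t \<le> ereal (MJ + real CARD('n) * MK)"
proof (cases "\<exists>i. t = a $ i")
  case True
  then show ?thesis using F_minf[OF a t] by auto
next
  case False
  then have ne: "\<forall>i. t \<noteq> a $ i" by auto
  have "(\<Sum>i\<in>UNIV. K i (t - a $ i)) \<le> (\<Sum>i\<in>(UNIV::'n set). MK)"
    by (rule sum_mono) (use diff_cases[OF a t] ne MK in blast)
  also have "\<dots> = real CARD('n) * MK" by simp
  finally have "ereal (\<Sum>i\<in>UNIV. K i (t - a $ i)) \<le> ereal (real CARD('n) * MK)" by simp
  then have "J t + ereal (\<Sum>i\<in>UNIV. K i (t - a $ i)) \<le> ereal MJ + ereal (real CARD('n) * MK)"
    using MJ[OF t] by (rule add_mono[rotated])
  then show ?thesis using F_eq[OF a t ne] by simp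
qed

lemma F_sing:
  assumes a: "a \<in> S_set" and t: "t \<in> {0..1}"
    and R: "\<forall>i s. s \<noteq> 0 \<and> \<bar>s\<bar> < \<rho> \<longrightarrow> K i s < R" and close: "\<bar>t - a $ i0\<bar> < \<rho>"
  shows "Ffun J K a t \<le> ereal (MJ + real CARD('n) * MK + R)"
proof (cases "\<exists>i. t = a $ i")
  case True
  then show ?thesis using F_minf[OF a t] by auto
next
  case False
  then have ne: "\<forall>i. t \<noteq> a $ i" by auto
  have "(\<Sum>i\<in>UNIV. K i (t - a $ i)) \<le> (\<Sum>i\<in>(UNIV::'n set). (if i = i0 then R else 0) + MK)"
  proof (rule sum_mono)
    fix i :: 'n
    show "K i (t - a $ i) \<le> (if i = i0 then R else 0) + MK"
    proof (cases "i = i0")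
      case True
      have "K i (t - a $ i) < R" using R close ne True by auto
      then show ?thesis using True MK0 by simp
    next
      case False
      then show ?thesis using diff_cases[OF a t, of i] ne MK by auto
    qed
  qed
  also have "\<dots> = R + real CARD('n) * MK" by (simp add: sum.distrib)
  finally have "ereal (\<Sum>i\<in>UNIV. K i (t - a $ i)) \<le> ereal (R + real CARD('n) * MK)" by simp
  then have "J t + ereal (\<Sum>i\<in>UNIV. K i (t - a $ i)) \<le> ereal MJ + ereal (R + real CARD('n) * MK)"
    using MJ[OF t] by (rule add_mono[rotated])
  then show ?thesis using F_eq[OF a t ne] by (simp add: algebra_simps)
qed

lemma mval_le:
  assumes a: "a \<in> S_set" and j: "j \<le> CARD('n)"
  shows "mval J K a j \<le> ereal (MJ + real CARD('n) * MK)"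
  unfolding mval_def
proof (rule SUP_least)
  fix t assume "t \<in> {yext a j..yext a (j + 1)}"
  then have "t \<in> {0..1}" using yext_range[OF a, of j] yext_range[OF a, of "j+1"] j by auto
  then show "Ffun J K a t \<le> ereal (MJ + real CARD('n) * MK)" by (rule F_le[OF a])
qed

lemma yS: "y \<in> S_set" using yY unfolding Y_set_def by auto

lemma comp_tendsto: "((\<lambda>a. a $ i) \<longlongrightarrow> y $ i) (nhds y)"
  by (intro tendsto_vec_nth) (rule filterlim_ident)

lemma S_nhds: "eventually (\<lambda>a. a \<in> S_set) (nhds y)"
proof -
  have y01: "\<And>i. 0 < y $ i \<and> y $ i < 1" using S_range[OF yS] by auto
  have ym: "\<And>i j. i < j \<Longrightarrow> y $ i < y $ j" using yS unfolding S_set_def by auto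
  have e1: "eventually (\<lambda>a. 0 < a $ i \<and> a $ i < 1) (nhds y)" for i
    using order_tendstoD(1)[OF comp_tendsto[of i], of 0] order_tendstoD(2)[OF comp_tendsto[of i], of 1] y01[of i]
    by (auto intro: eventually_conj)
  have e2: "eventually (\<lambda>a. i < j \<longrightarrow> a $ i < a $ j) (nhds y)" for i j
  proof (cases "i < j")
    case True
    have "((\<lambda>a. a $ j - a $ i) \<longlongrightarrow> y $ j - y $ i) (nhds y)"
      by (intro tendsto_diff comp_tendsto)
    from order_tendstoD(1)[OF this, of 0] ym[OF True] show ?thesis by (auto elim: eventually_mono)
  qed simp
  have "eventually (\<lambda>a. \<forall>i. 0 < a $ i \<and> a $ i < 1) (nhds y)"
    by (rule eventually_all_finite) (rule e1)
  moreover have "eventually (\<lambda>a. \<forall>i j. i < j \<longrightarrow> a $ i < a $ j) (nhds y)"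
    by (rule eventually_all_finite, rule eventually_all_finite) (rule e2)
  ultimately show ?thesis unfolding S_set_def by (auto elim: eventually_elim2)
qed

lemma theta_nhds: "\<exists>\<theta>>0. eventually (\<lambda>a. \<forall>i. \<theta> < a $ i \<and> a $ i < 1 - \<theta>) (nhds y)"
proof -
  define m where "m = Min (range (\<lambda>i. min (y $ i) (1 - y $ i)))"
  have pos: "\<forall>x\<in>range (\<lambda>i. min (y $ i) (1 - y $ i)). 0 < x" using S_range[OF yS] by auto
  have m: "m > 0" unfolding m_def using pos by (simp add: Min_gr_iff)
  have my0: "m \<le> min (y $ i) (1 - y $ i)" for i unfolding m_def by (rule Min_le) auto
  have my: "m \<le> y $ i" "m \<le> 1 - y $ i" for i using my0[of i] by auto
  have "eventually (\<lambda>a. m/2 < a $ i \<and> a $ i < 1 - m/2) (nhds y)" for i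
  proof -
    have "m/2 < y $ i" "y $ i < 1 - m/2" using my[of i] m by auto
    then show ?thesis
      using order_tendstoD(1)[OF comp_tendsto[of i], of "m/2"] order_tendstoD(2)[OF comp_tendsto[of i], of "1 - m/2"]
      by (auto intro: eventually_conj)
  qed
  then have "eventually (\<lambda>a. \<forall>i. m/2 < a $ i \<and> a $ i < 1 - m/2) (nhds y)"
    by (rule eventually_all_finite)
  then show ?thesis using m by (intro exI[of _ "m/2"]) auto
qed

end

lemma comb:
  fixes \<Delta> s :: "'a \<Rightarrow> real"
  assumes fin: "finite A" and l: "l \<in> A"
    and sg: "\<And>i. i \<in> A \<Longrightarrow> i \<noteq> l \<Longrightarrow> \<bar>\<Delta> i\<bar> = \<sigma> * \<Delta> i"
    and sl: "s l = - \<sigma>" and s1: "\<And>i. i \<in> A \<Longrightarrow> \<bar>s i\<bar> \<le> 1"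
    and tot: "X \<le> - \<sigma> * sum \<Delta> A"
  shows "X \<le> (\<Sum>i\<in>A. s i * \<Delta> i)"
proof -
  have e1: "(\<Sum>i\<in>A. s i * \<Delta> i) = s l * \<Delta> l + (\<Sum>i\<in>A-{l}. s i * \<Delta> i)"
    by (simp add: sum.remove[OF fin l])
  have e2: "(\<Sum>i\<in>A-{l}. - (\<sigma> * \<Delta> i)) \<le> (\<Sum>i\<in>A-{l}. s i * \<Delta> i)"
  proof (rule sum_mono)
    fix i assume i: "i \<in> A - {l}"
    have "\<bar>s i * \<Delta> i\<bar> \<le> \<bar>\<Delta> i\<bar>"
      using s1[of i] i by (simp add: abs_mult mult_left_le_one_le)
    then show "- (\<sigma> * \<Delta> i) \<le> s i * \<Delta> i" using sg[of i] i by (simp add: abs_le_iff)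
  qed
  have e3: "- \<sigma> * sum \<Delta> A = s l * \<Delta> l + (\<Sum>i\<in>A-{l}. - (\<sigma> * \<Delta> i))"
    using sl by (simp add: sum.remove[OF fin l] sum_negf sum_distrib_left algebra_simps)
  show ?thesis using e1 e2 e3 tot by linarith
qed

lemma incr_sign:
  fixes K :: "real \<Rightarrow> real"
  assumes cc: "concave_on I K" and tt: "t \<le> t'"
    and I: "t - \<alpha> \<in> I" "t - \<beta> \<in> I" "t' - \<alpha> \<in> I" "t' - \<beta> \<in> I"
  shows "\<bar>(K (t' - \<beta>) - K (t' - \<alpha>)) - (K (t - \<beta>) - K (t - \<alpha>))\<bar>
       = sgn (\<beta> - \<alpha>) * ((K (t' - \<beta>) - K (t' - \<alpha>)) - (K (t - \<beta>) - K (t - \<alpha>)))"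
proof (cases "\<alpha> < \<beta>")
  case True
  have "K ((t' - \<beta>) + (\<beta> - \<alpha>)) - K (t' - \<beta>) \<le> K ((t - \<beta>) + (\<beta> - \<alpha>)) - K (t - \<beta>)"
    by (rule concave_incr_mono[OF cc]) (use True tt I in auto)
  then have "0 \<le> (K (t' - \<beta>) - K (t' - \<alpha>)) - (K (t - \<beta>) - K (t - \<alpha>))" by simp
  then show ?thesis using True by simp
next
  case False
  show ?thesis
  proof (cases "\<alpha> = \<beta>")
    case True then show ?thesis by simp
  next
    case False2: False
    then have lt: "\<beta> < \<alpha>" using False by simp
    have "K ((t' - \<alpha>) + (\<alpha> - \<beta>)) - K (t' - \<alpha>) \<le> K ((t - \<alpha>) + (\<alpha> - \<beta>)) - K (t - \<alpha>)"
      by (rule concave_incr_mono[OF cc]) (use lt tt I in auto)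
    then have "(K (t' - \<beta>) - K (t' - \<alpha>)) - (K (t - \<beta>) - K (t - \<alpha>)) \<le> 0" by simp
    then show ?thesis using lt by simp
  qed
qed

lemma incr_pm:
  fixes K :: "real \<Rightarrow> real"
  assumes cr: "concave_on {0<..<1} K" and cl: "concave_on {-1<..<0} K" and pm: "PM c K"
    and t: "0 \<le> t0" "tn \<le> 1"
    and In: "tn - \<alpha> \<in> {0<..<1}" "tn - \<beta> \<in> {0<..<1}"
    and I0: "t0 - \<alpha> \<in> {-1<..<0}" "t0 - \<beta> \<in> {-1<..<0}"
  shows "c * \<bar>\<beta> - \<alpha>\<bar> \<le> - sgn (\<beta> - \<alpha>) * ((K (tn - \<beta>) - K (tn - \<alpha>)) - (K (t0 - \<beta>) - K (t0 - \<alpha>)))"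
proof -
  have gen: "c * (p - q) \<le> (K (tn - q) - K (tn - p)) - (K (t0 - q) - K (t0 - p))"
    if pq: "q < p" and In': "tn - p \<in> {0<..<1}" "tn - q \<in> {0<..<1}"
      and I0': "t0 - p \<in> {-1<..<0}" "t0 - q \<in> {-1<..<0}" for p q
  proof -
    define u where "u = tn - p"
    define d where "d = p - q"
    have d: "d > 0" using pq by (simp add: d_def)
    have ud: "u + d = tn - q" by (simp add: u_def d_def)
    have pmi: "c * ((u + d) - u) \<le> (K (u + d) - K u) - (K ((u + d) - 1) - K (u - 1))"
      by (rule pm_mono[OF cr cl pm]) (use In' ud d in \<open>auto simp: u_def\<close>)
    have inc: "K ((t0 - p) + d) - K (t0 - p) \<le> K ((u - 1) + d) - K (u - 1)"
      by (rule concave_incr_mono[OF cl d]) (use In' I0' t ud in \<open>auto simp: u_def d_def\<close>)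
    have "(t0 - p) + d = t0 - q" "(u - 1) + d = (u + d) - 1" by (auto simp: d_def)
    then show ?thesis using pmi inc ud by (simp add: u_def d_def algebra_simps)
  qed
  show ?thesis
  proof (cases "\<alpha> < \<beta>")
    case True
    from gen[of \<alpha> \<beta>] True In I0 show ?thesis by (simp add: algebra_simps)
  next
    case False
    show ?thesis
    proof (cases "\<alpha> = \<beta>")
      case True then show ?thesis by simp
    next
      case False2: False
      then have lt: "\<beta> < \<alpha>" using False by simp
      from gen[of \<beta> \<alpha>] lt In I0 show ?thesis by (simp add: algebra_simps)
    qed
  qed
qed

lemma eps_le:
  fixes x y C :: real
  assumes C: "C \<ge> 0" and h: "\<And>e. 0 < e \<Longrightarrow> e \<le> 1 \<Longrightarrow> x \<le> y + C * e"
  shows "x \<le> y"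
proof (rule ccontr)
  assume "\<not> x \<le> y"
  then have xy: "x - y > 0" by simp
  define e where "e = min 1 ((x - y) / (2 * (C + 1)))"
  have e: "0 < e" "e \<le> 1" using xy C by (auto simp: e_def)
  have "e \<le> (x - y) / (2 * (C + 1))" by (simp add: e_def)
  then have "e * (2 * (C + 1)) \<le> x - y" using C by (simp add: le_divide_eq)
  moreover have "C * e \<le> (C + 1) * e" using e by simp
  ultimately have "C * e < x - y" using e xy by (simp add: algebra_simps)
  then show False using h[OF e] by linarith
qed

context base begin

lemma mval_nonminf_point:
  assumes "mval J K a j \<noteq> -\<infinity>"
  shows "\<exists>t\<in>{yext a j..yext a (j+1)}. Ffun J K a t \<noteq> -\<infinity>"
proof (rule ccontr)
  assume "\<not> ?thesis"
  then have "mval J K a j \<le> -\<infinity>" unfolding mval_def by (intro SUP_least) auto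
  then show False using assms by simp
qed

lemma yext_mid:
  fixes a :: "real ^ 'n::{finite,linorder}"
  shows "1 \<le> j \<Longrightarrow> j \<le> CARD('n) \<Longrightarrow> yext a j = a $ idx (j - 1)"
  unfolding yext_def by auto

lemma L_j:
  assumes j: "j \<le> CARD('n)"
  shows "\<exists>Lj. eventually (\<lambda>a. ereal Lj \<le> mval J K a j) (nhds y)"
proof -
  have mv: "mval J K y j \<noteq> -\<infinity>" using yY j unfolding Y_set_def by auto
  obtain \<tau> where \<tau>I: "\<tau> \<in> {yext y j..yext y (j+1)}" and F\<tau>: "Ffun J K y \<tau> \<noteq> -\<infinity>"
    using mval_nonminf_point[OF mv] by blast
  have \<tau>01: "\<tau> \<in> {0..1}" using \<tau>I yext_range[OF yS, of j] yext_range[OF yS, of "j+1"] j by auto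
  have ne: "\<forall>i. \<tau> \<noteq> y $ i" using F_minf[OF yS \<tau>01] F\<tau> by metis
  have Om_y: "\<tau> - y $ i \<in> Om" for i using diff_cases[OF yS \<tau>01, of i] ne by auto
  define Sy where "Sy = (\<Sum>i\<in>UNIV. K i (\<tau> - y $ i))"
  have Fy: "Ffun J K y \<tau> = J \<tau> + ereal Sy" using F_eq[OF yS \<tau>01 ne] Sy_def by simp
  have Jfin: "J \<tau> \<noteq> -\<infinity>" using F\<tau> Fy by auto
  obtain jv where jv: "J \<tau> = ereal jv" using Jfin J_not_inf[OF \<tau>01] by (cases "J \<tau>") auto
  have tl: "((\<lambda>a. \<Sum>i\<in>UNIV. K i (\<tau> - a $ i)) \<longlongrightarrow> Sy) (nhds y)"
    unfolding Sy_def
  proof (intro tendsto_sum)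
    fix i :: 'n
    have "((\<lambda>a. \<tau> - a $ i) \<longlongrightarrow> \<tau> - y $ i) (nhds y)" by (intro tendsto_diff tendsto_const comp_tendsto)
    from isCont_tendsto_compose[OF isContK[OF Om_y[of i]] this]
    show "((\<lambda>a. K i (\<tau> - a $ i)) \<longlongrightarrow> K i (\<tau> - y $ i)) (nhds y)" .
  qed
  have e3: "eventually (\<lambda>a. Sy - 1 < (\<Sum>i\<in>UNIV. K i (\<tau> - a $ i))) (nhds y)"
    using order_tendstoD(1)[OF tl, of "Sy - 1"] by simp
  have e2: "eventually (\<lambda>a. \<forall>i. \<bar>a $ i - y $ i\<bar> < \<bar>\<tau> - y $ i\<bar>) (nhds y)"
  proof (rule eventually_all_finite)
    fix i
    have "\<bar>\<tau> - y $ i\<bar> > 0" using ne by auto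
    from tendstoD[OF comp_tendsto[of i] this]
    show "eventually (\<lambda>a. \<bar>a $ i - y $ i\<bar> < \<bar>\<tau> - y $ i\<bar>) (nhds y)"
      by (simp add: dist_real_def)
  qed
  have "eventually (\<lambda>a. ereal (jv + Sy - 1) \<le> mval J K a j) (nhds y)"
    using S_nhds e2 e3
  proof (eventually_elim)
    case (elim a)
    then have a: "a \<in> S_set" and cl: "\<forall>i. \<bar>a $ i - y $ i\<bar> < \<bar>\<tau> - y $ i\<bar>"
      and sa: "Sy - 1 < (\<Sum>i\<in>UNIV. K i (\<tau> - a $ i))" by auto
    have nea: "\<forall>i. \<tau> \<noteq> a $ i"
    proof
      fix i show "\<tau> \<noteq> a $ i"
      proof
        assume "\<tau> = a $ i"
        then show False using cl[rule_format, of i] by (simp add: abs_minus_commute)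
      qed
    qed
    have left: "yext a j \<le> \<tau>"
    proof (cases "j = 0")
      case True then show ?thesis using \<tau>01 by (simp add: yext_def)
    next
      case False
      define i where "i = (idx (j - 1) :: 'n)"
      have ya: "yext a j = a $ i" "yext y j = y $ i" using False j by (simp_all add: yext_mid i_def)
      have "y $ i \<le> \<tau>" using \<tau>I ya by simp
      moreover have "\<tau> \<noteq> y $ i" using ne by simp
      ultimately have "y $ i < \<tau>" by simp
      then show ?thesis using cl[rule_format, of i] ya by auto
    qed
    have right: "\<tau> \<le> yext a (j + 1)"
    proof (cases "j + 1 \<le> CARD('n)")
      case False then show ?thesis using \<tau>01 by (simp add: yext_def)
    next
      case True
      define i where "i = (idx j :: 'n)"
      have ya: "yext a (j+1) = a $ i" "yext y (j+1) = y $ i" using True by (simp_all add: yext_mid i_def)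
      have "\<tau> \<le> y $ i" using \<tau>I ya by simp
      moreover have "\<tau> \<noteq> y $ i" using ne by simp
      ultimately have "\<tau> < y $ i" by simp
      then show ?thesis using cl[rule_format, of i] ya by auto
    qed
    have Fa: "Ffun J K a \<tau> = ereal (jv + (\<Sum>i\<in>UNIV. K i (\<tau> - a $ i)))"
      using F_eq[OF a \<tau>01 nea] jv by simp
    have "Ffun J K a \<tau> \<le> mval J K a j"
      unfolding mval_def by (rule SUP_upper) (use left right in auto)
    moreover have "ereal (jv + Sy - 1) \<le> Ffun J K a \<tau>" using Fa sa by simp
    ultimately show ?case by (rule order_trans[rotated])
  qed
  then show ?thesis by blast
qed

lemma L_exists: "\<exists>L. eventually (\<lambda>a. \<forall>j\<le>CARD('n). ereal L \<le> mval J K a j) (nhds y)"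
proof -
  have "\<forall>j\<in>{..CARD('n)}. \<exists>Lj. eventually (\<lambda>a. ereal Lj \<le> mval J K a j) (nhds y)"
    using L_j by auto
  then obtain Lf where Lf: "\<And>j. j \<in> {..CARD('n)} \<Longrightarrow> eventually (\<lambda>a. ereal (Lf j) \<le> mval J K a j) (nhds y)"
    by metis
  define L where "L = - (\<Sum>j\<le>CARD('n). \<bar>Lf j\<bar>)"
  have LL: "L \<le> Lf j" if "j \<in> {..CARD('n)}" for j
  proof -
    have "\<bar>Lf j\<bar> \<le> (\<Sum>j\<le>CARD('n). \<bar>Lf j\<bar>)"
      by (rule member_le_sum) (use that in auto)
    then show ?thesis unfolding L_def by linarith
  qed
  have "\<forall>j\<in>{..CARD('n)}. eventually (\<lambda>a. ereal L \<le> mval J K a j) (nhds y)"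
  proof
    fix j assume j: "j \<in> {..CARD('n)}"
    have LLe: "ereal L \<le> ereal (Lf j)" using LL[OF j] by simp
    from Lf[OF j] show "eventually (\<lambda>a. ereal L \<le> mval J K a j) (nhds y)"
    proof (rule eventually_mono)
      fix a assume "ereal (Lf j) \<le> mval J K a j"
      with LLe show "ereal L \<le> mval J K a j" by (rule order_trans)
    qed
  qed
  from eventually_ball_finite[OF _ this]
  have "eventually (\<lambda>a. \<forall>j\<in>{..CARD('n)}. ereal L \<le> mval J K a j) (nhds y)" by simp
  then have "eventually (\<lambda>a. \<forall>j\<le>CARD('n). ereal L \<le> mval J K a j) (nhds y)"
    by (rule eventually_mono) auto
  then show ?thesis by blast
qed

end

locale main = base K J c y MJ MK
  for K :: "'n::{finite,linorder} \<Rightarrow> real \<Rightarrow> real" and J c and y :: "real ^ 'n::{finite,linorder}" and MJ MK +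
  fixes L \<rho> r \<theta> Lip :: real
  assumes Lb: "\<And>a j. a \<in> ball y r \<Longrightarrow> j \<le> CARD('n) \<Longrightarrow> ereal L \<le> mval J K a j"
    and \<rho>0: "\<rho> > 0" and \<rho>K: "\<forall>i s. s \<noteq> 0 \<and> \<bar>s\<bar> < \<rho> \<longrightarrow> K i s < L - 2 - MJ - real CARD('n) * MK"
    and r0: "r > 0" and r\<rho>: "r \<le> \<rho>/4" and rS: "\<And>a. a \<in> ball y r \<Longrightarrow> a \<in> S_set"
    and \<theta>0: "\<theta> > 0" and \<theta>a: "\<And>a i. a \<in> ball y r \<Longrightarrow> \<theta> < a $ i \<and> a $ i < 1 - \<theta>"
    and Lip0: "Lip \<ge> 0"
    and Lip1: "\<And>i x x'. x \<in> {\<rho>/4..1-\<theta>} \<Longrightarrow> x' \<in> {\<rho>/4..1-\<theta>} \<Longrightarrow> \<bar>K i x - K i x'\<bar> \<le> Lip * \<bar>x - x'\<bar>"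
    and Lip2: "\<And>i x x'. x \<in> {-(1-\<theta>)..-(\<rho>/4)} \<Longrightarrow> x' \<in> {-(1-\<theta>)..-(\<rho>/4)} \<Longrightarrow> \<bar>K i x - K i x'\<bar> \<le> Lip * \<bar>x - x'\<bar>"
begin

definition M where "M a j = real_of_ereal (mval J K a j)"
definition al where "al j = (if j = 0 then 0 else yext y j + \<rho>/2)"
definition be where "be j = (if j = CARD('n) then 1 else yext y (j+1) - \<rho>/2)"
definition D where "D a b t = (\<Sum>i\<in>UNIV. K i (t - b $ i) - K i (t - a $ i))"

lemma close: "a \<in> ball y r \<Longrightarrow> \<bar>a $ i - y $ i\<bar> < r"
proof -
  assume a: "a \<in> ball y r"
  have "\<bar>(y - a) $ i\<bar> \<le> norm (y - a)" by (rule component_le_norm_cart)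
  moreover have "norm (y - a) < r" using a by (simp add: dist_norm)
  ultimately show ?thesis by (simp add: abs_minus_commute)
qed

lemma mval_fin:
  assumes a: "a \<in> ball y r" and j: "j \<le> CARD('n)"
  shows "mval J K a j = ereal (M a j)" "L \<le> M a j"
proof -
  have lo: "ereal L \<le> mval J K a j" by (rule Lb[OF a j])
  have hi: "mval J K a j \<le> ereal (MJ + real CARD('n) * MK)" by (rule mval_le[OF rS[OF a] j])
  have fin: "\<bar>mval J K a j\<bar> \<noteq> \<infinity>" using lo hi by auto
  show eq: "mval J K a j = ereal (M a j)" unfolding M_def using fin by (simp add: ereal_real')
  show "L \<le> M a j" using lo unfolding eq by simp
qed

lemma yext_lt1: "1 \<le> j \<Longrightarrow> j \<le> CARD('n) \<Longrightarrow> yext y j = y $ idx (j - 1)"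
  by (rule yext_mid)

lemma T01:
  assumes j: "j \<le> CARD('n)" and t: "t \<in> {al j..be j}"
  shows "t \<in> {0..1}"
proof -
  have "0 \<le> al j" using yext_range[OF yS, of j] j \<rho>0 by (auto simp: al_def)
  moreover have "be j \<le> 1" using yext_range[OF yS, of "j+1"] j \<rho>0 by (auto simp: be_def)
  ultimately show ?thesis using t by auto
qed

lemma Tpos:
  assumes j: "j \<le> CARD('n)" and t: "t \<in> {al j..be j}" and p: "pos i < j"
  shows "\<rho>/2 \<le> t - y $ i"
proof -
  have j1: "j \<noteq> 0" using p by auto
  have "y $ i = yext y (pos i + 1)" by (rule yext_pos[symmetric])
  also have "\<dots> \<le> yext y j" by (rule yext_le[OF yS]) (use p j in auto)
  finally show ?thesis using t j1 by (auto simp: al_def)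
qed

lemma Tneg:
  assumes j: "j \<le> CARD('n)" and t: "t \<in> {al j..be j}" and p: "j \<le> pos i"
  shows "\<rho>/2 \<le> y $ i - t"
proof -
  have jn: "j \<noteq> CARD('n)" using p pos_lt[of i] by auto
  have "yext y (j + 1) \<le> yext y (pos i + 1)" by (rule yext_le[OF yS]) (use p pos_lt[of i] in auto)
  also have "\<dots> = y $ i" by (rule yext_pos)
  finally show ?thesis using t jn by (auto simp: be_def)
qed

lemma Tb:
  assumes j: "j \<le> CARD('n)" and t: "t \<in> {al j..be j}" and b: "b \<in> ball y r"
  shows "t \<in> {yext b j..yext b (j + 1)}"
proof -
  have left: "yext b j \<le> t"
  proof (cases "j = 0")
    case True then show ?thesis using T01[OF j t] by (simp add: yext_def)
  next
    case False
    have e: "yext b j = b $ idx (j - 1)" "yext y j = y $ idx (j - 1)"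
      using False j by (simp_all add: yext_mid)
    have "b $ idx (j - 1) < y $ idx (j - 1) + r" using close[OF b, of "idx (j - 1)"] by auto
    then show ?thesis using t False e r\<rho> \<rho>0 by (auto simp: al_def)
  qed
  have right: "t \<le> yext b (j + 1)"
  proof (cases "j = CARD('n)")
    case True then show ?thesis using T01[OF j t] by (simp add: yext_def)
  next
    case False
    then have j1: "j + 1 \<le> CARD('n)" using j by auto
    have e: "yext b (j+1) = b $ idx j" "yext y (j+1) = y $ idx j"
      using j1 by (simp_all add: yext_mid)
    have "y $ idx j - r < b $ idx j" using close[OF b, of "idx j"] by auto
    then show ?thesis using t False e r\<rho> \<rho>0 by (auto simp: be_def)
  qed
  show ?thesis using left right by auto
qed

lemma Targ:
  assumes j: "j \<le> CARD('n)" and t: "t \<in> {al j..be j}" and b: "b \<in> ball y r"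
  shows "pos i < j \<Longrightarrow> t - b $ i \<in> {\<rho>/4..1-\<theta>}"
    and "j \<le> pos i \<Longrightarrow> t - b $ i \<in> {-(1-\<theta>)..-(\<rho>/4)}"
proof -
  have cl: "\<bar>b $ i - y $ i\<bar> < r" by (rule close[OF b])
  have th: "\<theta> < b $ i" "b $ i < 1 - \<theta>" using \<theta>a[OF b] by auto
  have t1: "0 \<le> t" "t \<le> 1" using T01[OF j t] by auto
  show "t - b $ i \<in> {\<rho>/4..1-\<theta>}" if p: "pos i < j"
    using Tpos[OF j t p] cl th t1 r\<rho> by auto
  show "t - b $ i \<in> {-(1-\<theta>)..-(\<rho>/4)}" if p: "j \<le> pos i"
    using Tneg[OF j t p] cl th t1 r\<rho> by auto
qed

lemma pos_set: "{\<rho>/4..1-\<theta>} \<subseteq> {0<..<1}" using \<rho>0 \<theta>0 by auto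
lemma neg_set: "{-(1-\<theta>)..-(\<rho>/4)} \<subseteq> {-1<..<0}" using \<rho>0 \<theta>0 by auto

lemma TOm:
  assumes j: "j \<le> CARD('n)" and t: "t \<in> {al j..be j}" and b: "b \<in> ball y r"
  shows "t - b $ i \<in> Om"
proof (cases "pos i < j")
  case True
  from Targ(1)[OF j t b True] pos_set have "t - b $ i \<in> {0<..<1}" by blast
  then show ?thesis unfolding Om_def by blast
next
  case False
  then have "j \<le> pos i" by simp
  from Targ(2)[OF j t b this] neg_set have "t - b $ i \<in> {-1<..<0}" by blast
  then show ?thesis unfolding Om_def by blast
qed

lemma T_ne: 
  assumes j: "j \<le> CARD('n)" and t: "t \<in> {al j..be j}" and b: "b \<in> ball y r"
  shows "\<forall>i. t \<noteq> b $ i"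
  using TOm[OF j t b] unfolding Om_iff by auto

lemma F_T:
  assumes j: "j \<le> CARD('n)" and t: "t \<in> {al j..be j}" and b: "b \<in> ball y r"
  shows "Ffun J K b t = J t + ereal (\<Sum>i\<in>UNIV. K i (t - b $ i))"
  by (rule F_eq[OF rS[OF b] T01[OF j t] T_ne[OF j t b]])

lemma NM0:
  assumes a: "a \<in> ball y r" and j: "j \<le> CARD('n)" and e: "0 < \<epsilon>" "\<epsilon> \<le> 1"
  shows "\<exists>t\<in>{al j..be j}. \<exists>jt. J t = ereal jt \<and> M a j - \<epsilon> < jt + (\<Sum>i\<in>UNIV. K i (t - a $ i))"
proof -
  note mf = mval_fin[OF a j]
  have "ereal (M a j - \<epsilon>) < mval J K a j" using mf e by simp
  then obtain t where tI: "t \<in> {yext a j..yext a (j+1)}" and tF: "ereal (M a j - \<epsilon>) < Ffun J K a t"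
    unfolding mval_def less_SUP_iff by blast
  have aS: "a \<in> S_set" by (rule rS[OF a])
  have t01: "t \<in> {0..1}" using tI yext_range[OF aS, of j] yext_range[OF aS, of "j+1"] j by auto
  have big: "ereal (L - 1) < Ffun J K a t"
  proof -
    have "ereal (L - 1) \<le> ereal (M a j - \<epsilon>)" using mf(2) e by simp
    then show ?thesis using tF by (rule le_less_trans)
  qed
  have far: "\<rho> \<le> \<bar>t - a $ i\<bar>" for i
  proof (rule ccontr)
    assume "\<not> ?thesis"
    then have "\<bar>t - a $ i\<bar> < \<rho>" by simp
    from F_sing[OF aS t01 \<rho>K this] have "Ffun J K a t \<le> ereal (L - 2)" by simp
    from less_le_trans[OF big this] show False by simp
  qed
  have ne: "\<forall>i. t \<noteq> a $ i" using far \<rho>0 by (metis abs_zero diff_self not_le)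
  have Fa: "Ffun J K a t = J t + ereal (\<Sum>i\<in>UNIV. K i (t - a $ i))" by (rule F_eq[OF aS t01 ne])
  have Jf: "J t \<noteq> -\<infinity>" using big Fa by auto
  obtain jt where jt: "J t = ereal jt" using Jf J_not_inf[OF t01] by (cases "J t") auto
  have lt: "M a j - \<epsilon> < jt + (\<Sum>i\<in>UNIV. K i (t - a $ i))" using tF Fa jt by simp
  have tal: "al j \<le> t"
  proof (cases "j = 0")
    case True then show ?thesis using t01 by (simp add: al_def)
  next
    case False
    define i where "i = (idx (j - 1) :: 'n)"
    have e1: "yext a j = a $ i" "yext y j = y $ i" using False j by (simp_all add: yext_mid i_def)
    have "a $ i \<le> t" using tI e1 by simp
    then have "a $ i + \<rho> \<le> t" using far[of i] by auto
    moreover have "y $ i - r < a $ i" using close[OF a, of i] by auto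
    ultimately show ?thesis using False e1 r\<rho> \<rho>0 by (simp add: al_def)
  qed
  have tbe: "t \<le> be j"
  proof (cases "j = CARD('n)")
    case True then show ?thesis using t01 by (simp add: be_def)
  next
    case False
    then have j1: "j + 1 \<le> CARD('n)" using j by auto
    define i where "i = (idx j :: 'n)"
    have e1: "yext a (j+1) = a $ i" "yext y (j+1) = y $ i" using j1 by (simp_all add: yext_mid i_def)
    have "t \<le> a $ i" using tI e1 by simp
    then have "t + \<rho> \<le> a $ i" using far[of i] by auto
    moreover have "a $ i < y $ i + r" using close[OF a, of i] by auto
    ultimately show ?thesis using False e1 r\<rho> \<rho>0 by (simp add: be_def)
  qed
  show ?thesis using tal tbe jt lt by auto
qed

lemma NM:
  assumes a: "a \<in> ball y r" and b: "b \<in> ball y r" and j: "j \<le> CARD('n)" and e: "0 < \<epsilon>" "\<epsilon> \<le> 1"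
  shows "\<exists>t\<in>{al j..be j}. D a b t - \<epsilon> \<le> M b j - M a j"
proof -
  obtain t jt where t: "t \<in> {al j..be j}" and jt: "J t = ereal jt"
    and lt: "M a j - \<epsilon> < jt + (\<Sum>i\<in>UNIV. K i (t - a $ i))"
    using NM0[OF a j e] by blast
  have "Ffun J K b t \<le> mval J K b j"
    unfolding mval_def by (rule SUP_upper) (rule Tb[OF j t b])
  then have "ereal (jt + (\<Sum>i\<in>UNIV. K i (t - b $ i))) \<le> ereal (M b j)"
    using F_T[OF j t b] jt mval_fin(1)[OF b j] by simp
  then have le: "jt + (\<Sum>i\<in>UNIV. K i (t - b $ i)) \<le> M b j" by simp
  have "D a b t = (\<Sum>i\<in>UNIV. K i (t - b $ i)) - (\<Sum>i\<in>UNIV. K i (t - a $ i))"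
    unfolding D_def by (simp add: sum_subtractf)
  then show ?thesis using t le lt by (intro bexI[of _ t]) auto
qed

lemma D_swap: "D b a t = - D a b t"
  unfolding D_def by (simp add: sum_negf[symmetric])

lemma Dcont:
  assumes a: "a \<in> ball y r" and b: "b \<in> ball y r" and j: "j \<le> CARD('n)"
  shows "continuous_on {al j..be j} (D a b)"
proof -
  have c1: "continuous_on {al j..be j} (\<lambda>t. K i (t - x $ i))" if x: "x \<in> ball y r" for x i
  proof -
    have sub: "(\<lambda>t. t - x $ i) ` {al j..be j} \<subseteq> Om" using TOm[OF j _ x] by blast
    have "continuous_on {al j..be j} (\<lambda>t. t - x $ i)" by (intro continuous_intros)
    from continuous_on_compose2[OF Kcont[of i] this sub] show ?thesis .
  qed
  show ?thesis unfolding D_def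
    by (intro continuous_on_sum continuous_on_diff c1 a b)
qed

lemma IV:
  assumes a: "a \<in> ball y r" and b: "b \<in> ball y r" and j: "j \<le> CARD('n)" and e: "0 < \<epsilon>" "\<epsilon> \<le> 1"
  shows "\<exists>t\<in>{al j..be j}. \<bar>M b j - M a j - D a b t\<bar> \<le> \<epsilon>"
proof -
  define dM where "dM = M b j - M a j"
  obtain t1 where t1: "t1 \<in> {al j..be j}" "D a b t1 \<le> dM + \<epsilon>"
    using NM[OF a b j e] unfolding dM_def by force
  obtain t2 where t2: "t2 \<in> {al j..be j}" "D b a t2 - \<epsilon> \<le> M a j - M b j"
    using NM[OF b a j e] by blast
  have sw: "D b a t2 = - D a b t2" by (rule D_swap)
  have t2': "dM - \<epsilon> \<le> D a b t2" using t2(2) sw unfolding dM_def by linarith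
  have cont: "continuous_on {min t1 t2..max t1 t2} (D a b)"
    by (rule continuous_on_subset[OF Dcont[OF a b j]]) (use t1 t2 in auto)
  show ?thesis
  proof (cases "dM - \<epsilon> \<le> D a b t1")
    case True then show ?thesis using t1 unfolding dM_def by (intro bexI[of _ t1]) auto
  next
    case False
    show ?thesis
    proof (cases "D a b t2 \<le> dM + \<epsilon>")
      case True then show ?thesis using t2 t2' unfolding dM_def by (intro bexI[of _ t2]) auto
    next
      case False2: False
      have f1: "D a b t1 \<le> dM" "dM \<le> D a b t2" using False False2 e t2' t1 by auto
      obtain x where x: "min t1 t2 \<le> x" "x \<le> max t1 t2" "D a b x = dM"
      proof (cases "t1 \<le> t2")
        case True
        then have "continuous_on {t1..t2} (D a b)" using cont by simp
        from IVT'[of "D a b" t1 dM t2, OF f1 True this] that True show ?thesis by auto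
      next
        case False
        then have tt: "t2 \<le> t1" by simp
        then have "continuous_on {t2..t1} (D a b)" using cont by simp
        from IVT2'[of "D a b" t1 dM t2, OF f1 tt this] that tt show ?thesis by auto
      qed
      have "x \<in> {al j..be j}" using x t1 t2 by auto
      then show ?thesis using x e unfolding dM_def by (intro bexI[of _ x]) auto
    qed
  qed
qed

end

context main begin

lemma Dlip:
  assumes a: "a \<in> ball y r" and b: "b \<in> ball y r" and j: "j \<le> CARD('n)" and t: "t \<in> {al j..be j}"
  shows "\<bar>D a b t\<bar> \<le> Lip * (\<Sum>i\<in>UNIV. \<bar>b $ i - a $ i\<bar>)"
proof -
  have "\<bar>D a b t\<bar> \<le> (\<Sum>i\<in>UNIV. \<bar>K i (t - b $ i) - K i (t - a $ i)\<bar>)" unfolding D_def by (rule sum_abs)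
  also have "\<dots> \<le> (\<Sum>i\<in>UNIV. Lip * \<bar>b $ i - a $ i\<bar>)"
  proof (rule sum_mono)
    fix i
    have eq: "\<bar>(t - b $ i) - (t - a $ i)\<bar> = \<bar>b $ i - a $ i\<bar>" by (simp add: abs_minus_commute)
    show "\<bar>K i (t - b $ i) - K i (t - a $ i)\<bar> \<le> Lip * \<bar>b $ i - a $ i\<bar>"
    proof (cases "pos i < j")
      case True
      from Lip1[OF Targ(1)[OF j t b True] Targ(1)[OF j t a True]] show ?thesis unfolding eq .
    next
      case False
      then have p: "j \<le> pos i" by simp
      from Lip2[OF Targ(2)[OF j t b p] Targ(2)[OF j t a p]] show ?thesis unfolding eq .
    qed
  qed
  also have "\<dots> = Lip * (\<Sum>i\<in>UNIV. \<bar>b $ i - a $ i\<bar>)" by (simp add: sum_distrib_left)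
  finally show ?thesis .
qed

lemma dM_bound:
  assumes a: "a \<in> ball y r" and b: "b \<in> ball y r" and j: "j \<le> CARD('n)"
  shows "\<bar>M b j - M a j\<bar> \<le> Lip * (\<Sum>i\<in>UNIV. \<bar>b $ i - a $ i\<bar>)"
proof (rule eps_le[where C = 1])
  fix e :: real assume e: "0 < e" "e \<le> 1"
  obtain t where t: "t \<in> {al j..be j}" "\<bar>M b j - M a j - D a b t\<bar> \<le> e" using IV[OF a b j e] by blast
  have "\<bar>D a b t\<bar> \<le> Lip * (\<Sum>i\<in>UNIV. \<bar>b $ i - a $ i\<bar>)" by (rule Dlip[OF a b j t(1)])
  then show "\<bar>M b j - M a j\<bar> \<le> Lip * (\<Sum>i\<in>UNIV. \<bar>b $ i - a $ i\<bar>) + 1 * e" using t(2) by linarith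
qed simp

lemma Phi_eq:
  assumes a: "a \<in> ball y r"
  shows "Phi J K a $ i = M a (pos i + 1) - M a (pos i)"
proof -
  have p: "pos i + 1 \<le> CARD('n)" "pos i \<le> CARD('n)" using pos_lt[of i] by auto
  show ?thesis unfolding Phi_def using mval_fin(1)[OF a p(1)] mval_fin(1)[OF a p(2)] by simp
qed

lemma sum_abs_le_norm: "(\<Sum>i\<in>UNIV. \<bar>x $ i\<bar>) \<le> real CARD('n) * norm (x :: real ^ 'n::{finite,linorder})"
proof -
  have "(\<Sum>i\<in>UNIV. \<bar>x $ i\<bar>) \<le> (\<Sum>i\<in>(UNIV::'n set). norm x)"
    by (rule sum_mono) (rule component_le_norm_cart)
  then show ?thesis by simp
qed

lemma upper:
  assumes a: "a \<in> ball y r" and b: "b \<in> ball y r"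
  shows "dist (Phi J K b) (Phi J K a) \<le> (2 * real CARD('n) * real CARD('n) * Lip) * dist b a"
proof -
  define S where "S = (\<Sum>i\<in>UNIV. \<bar>b $ i - a $ i\<bar>)"
  have "dist (Phi J K b) (Phi J K a) = norm (Phi J K b - Phi J K a)" by (simp add: dist_norm)
  also have "\<dots> \<le> (\<Sum>i\<in>UNIV. \<bar>(Phi J K b - Phi J K a) $ i\<bar>)" by (rule norm_le_l1_cart)
  also have "\<dots> \<le> (\<Sum>i\<in>(UNIV::'n set). 2 * Lip * S)"
  proof (rule sum_mono)
    fix i :: 'n
    have p: "pos i + 1 \<le> CARD('n)" "pos i \<le> CARD('n)" using pos_lt[of i] by auto
    have "(Phi J K b - Phi J K a) $ i = (M b (pos i + 1) - M a (pos i + 1)) - (M b (pos i) - M a (pos i))"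
      using Phi_eq[OF a, of i] Phi_eq[OF b, of i] by simp
    moreover have "\<bar>M b (pos i + 1) - M a (pos i + 1)\<bar> \<le> Lip * S" using dM_bound[OF a b p(1)] S_def by simp
    moreover have "\<bar>M b (pos i) - M a (pos i)\<bar> \<le> Lip * S" using dM_bound[OF a b p(2)] S_def by simp
    ultimately show "\<bar>(Phi J K b - Phi J K a) $ i\<bar> \<le> 2 * Lip * S" by linarith
  qed
  also have "\<dots> = real CARD('n) * (2 * Lip) * S" by simp
  also have "\<dots> \<le> real CARD('n) * (2 * Lip) * (real CARD('n) * norm (b - a))"
  proof -
    have "S \<le> real CARD('n) * norm (b - a)" unfolding S_def using sum_abs_le_norm[of "b - a"] by simp
    then show ?thesis using Lip0 by (intro mult_left_mono) auto
  qed
  also have "\<dots> = (2 * real CARD('n) * real CARD('n) * Lip) * dist b a" by (simp add: dist_norm)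
  finally show ?thesis .
qed

lemma lower:
  assumes a: "a \<in> ball y r" and b: "b \<in> ball y r"
  shows "c * (\<Sum>l\<in>UNIV. \<bar>b $ l - a $ l\<bar>) \<le> (\<Sum>i\<in>UNIV. \<bar>Phi J K b $ i - Phi J K a $ i\<bar>)"
proof (rule eps_le[where C = "2 * real CARD('n)"])
  show "0 \<le> 2 * real CARD('n)" by simp
  fix \<epsilon> :: real assume e: "0 < \<epsilon>" "\<epsilon> \<le> 1"
  have "\<forall>j\<in>{..CARD('n)}. \<exists>t. t \<in> {al j..be j} \<and> \<bar>M b j - M a j - D a b t\<bar> \<le> \<epsilon>"
    using IV[OF a b _ e] by fastforce
  from bchoice[OF this] obtain tt where tt0: "\<forall>j\<in>{..CARD('n)}. tt j \<in> {al j..be j} \<and> \<bar>M b j - M a j - D a b (tt j)\<bar> \<le> \<epsilon>"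
    by blast
  have ttT: "tt j \<in> {al j..be j}" if "j \<le> CARD('n)" for j using tt0 that by auto
  have tte: "\<bar>M b j - M a j - D a b (tt j)\<bar> \<le> \<epsilon>" if "j \<le> CARD('n)" for j using tt0 that by auto
  define dM where "dM j = M b j - M a j" for j
  define G where "G l t = K l (t - b $ l) - K l (t - a $ l)" for l t
  define s where "s i = - sgn (b $ i - a $ i)" for i
  define \<eta> where "\<eta> j = dM j - D a b (tt j)" for j
  have DG: "D a b t = (\<Sum>l\<in>UNIV. G l t)" for t unfolding D_def G_def by simp
  have Phieq: "Phi J K b $ i - Phi J K a $ i = dM (pos i + 1) - dM (pos i)" for i
    using Phi_eq[OF a, of i] Phi_eq[OF b, of i] unfolding dM_def by simp
  have posle: "pos i + 1 \<le> CARD('n)" "pos i \<le> CARD('n)" for i :: 'n using pos_lt[of i] by auto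
  have s1: "\<bar>s i\<bar> \<le> 1" for i unfolding s_def by (cases "b $ i - a $ i" rule: linorder_cases) auto
  have split: "s i * (Phi J K b $ i - Phi J K a $ i) =
      s i * (D a b (tt (pos i + 1)) - D a b (tt (pos i))) + s i * (\<eta> (pos i + 1) - \<eta> (pos i))" for i
    unfolding Phieq \<eta>_def by (simp add: algebra_simps)
  have err: "- (2 * \<epsilon>) \<le> s i * (\<eta> (pos i + 1) - \<eta> (pos i))" for i
  proof -
    have h1: "\<bar>\<eta> (pos i + 1)\<bar> \<le> \<epsilon>" "\<bar>\<eta> (pos i)\<bar> \<le> \<epsilon>"
      using tte[OF posle(1)[of i]] tte[OF posle(2)[of i]] unfolding \<eta>_def dM_def by auto
    have h2: "\<bar>\<eta> (pos i + 1) - \<eta> (pos i)\<bar> \<le> \<bar>\<eta> (pos i + 1)\<bar> + \<bar>\<eta> (pos i)\<bar>" by (rule abs_triangle_ineq4)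
    have h3: "\<bar>s i * (\<eta> (pos i + 1) - \<eta> (pos i))\<bar> \<le> \<bar>\<eta> (pos i + 1) - \<eta> (pos i)\<bar>"
      using s1[of i] by (simp add: abs_mult mult_left_le_one_le)
    have h4: "- \<bar>s i * (\<eta> (pos i + 1) - \<eta> (pos i))\<bar> \<le> s i * (\<eta> (pos i + 1) - \<eta> (pos i))" by simp
    show ?thesis using h1 h2 h3 h4 by linarith
  qed
  have mainl: "c * \<bar>b $ l - a $ l\<bar> \<le> (\<Sum>i\<in>UNIV. s i * (G l (tt (pos i + 1)) - G l (tt (pos i))))" for l
  proof (rule comb[where \<sigma> = "sgn (b $ l - a $ l)" and l = l])
    show "finite (UNIV :: 'n set)" by simp
    show "l \<in> UNIV" by simp
    show "s l = - sgn (b $ l - a $ l)" by (simp add: s_def)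
    show "\<And>i. i \<in> UNIV \<Longrightarrow> \<bar>s i\<bar> \<le> 1" using s1 by auto
  next
    fix i assume "i \<in> (UNIV :: 'n set)" and il: "i \<noteq> l"
    define t where "t = tt (pos i)"
    define t' where "t' = tt (pos i + 1)"
    have tT: "t \<in> {al (pos i)..be (pos i)}" unfolding t_def by (rule ttT[OF posle(2)])
    have tT': "t' \<in> {al (pos i + 1)..be (pos i + 1)}" unfolding t'_def by (rule ttT[OF posle(1)])
    have "be (pos i) < al (pos i + 1)"
      using posle(1)[of i] \<rho>0 by (auto simp: al_def be_def)
    then have tle: "t \<le> t'" using tT tT' by auto
    have pl: "pos l \<noteq> pos i" using il by (simp add: pos_inj)
    show "\<bar>G l (tt (pos i + 1)) - G l (tt (pos i))\<bar> = sgn (b $ l - a $ l) * (G l (tt (pos i + 1)) - G l (tt (pos i)))"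
    proof (cases "pos l < pos i")
      case True
      then have T2: "pos l < pos i + 1" by simp
      note I = subsetD[OF pos_set Targ(1)[OF posle(2) tT a True]] subsetD[OF pos_set Targ(1)[OF posle(2) tT b True]]
          subsetD[OF pos_set Targ(1)[OF posle(1) tT' a T2]] subsetD[OF pos_set Targ(1)[OF posle(1) tT' b T2]]
      from incr_sign[OF cr[of l] tle I] show ?thesis unfolding G_def t_def t'_def .
    next
      case False
      then have F1: "pos i \<le> pos l" and F2: "pos i + 1 \<le> pos l" using pl by auto
      note I = subsetD[OF neg_set Targ(2)[OF posle(2) tT a F1]] subsetD[OF neg_set Targ(2)[OF posle(2) tT b F1]]
          subsetD[OF neg_set Targ(2)[OF posle(1) tT' a F2]] subsetD[OF neg_set Targ(2)[OF posle(1) tT' b F2]]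
      from incr_sign[OF cl[of l] tle I] show ?thesis unfolding G_def t_def t'_def .
    qed
  next
    have tel: "(\<Sum>i\<in>(UNIV::'n set). G l (tt (pos i + 1)) - G l (tt (pos i))) = G l (tt (CARD('n))) - G l (tt 0)"
      by (rule telescope_pos[of "\<lambda>k. G l (tt k)"])
    have n0: "CARD('n) \<le> CARD('n)" "(0::nat) \<le> CARD('n)" by auto
    have tn: "tt (CARD('n)) \<in> {al (CARD('n))..be (CARD('n))}" by (rule ttT[OF n0(1)])
    have t0: "tt 0 \<in> {al 0..be 0}" by (rule ttT[OF n0(2)])
    have pn: "pos l < CARD('n)" by (rule pos_lt)
    have p0: "0 \<le> pos l" by simp
    note In = subsetD[OF pos_set Targ(1)[OF n0(1) tn a pn]] subsetD[OF pos_set Targ(1)[OF n0(1) tn b pn]]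
    note I0 = subsetD[OF neg_set Targ(2)[OF n0(2) t0 a p0]] subsetD[OF neg_set Targ(2)[OF n0(2) t0 b p0]]
    have r01: "0 \<le> tt 0" "tt (CARD('n)) \<le> 1" using T01[OF n0(2) t0] T01[OF n0(1) tn] by auto
    have "c * \<bar>b $ l - a $ l\<bar> \<le> - sgn (b $ l - a $ l) * (G l (tt (CARD('n))) - G l (tt 0))"
      unfolding G_def by (rule incr_pm[OF cr[of l] cl[of l] pmK[of l] r01 In I0])
    then show "c * \<bar>b $ l - a $ l\<bar> \<le> - sgn (b $ l - a $ l) * (\<Sum>i\<in>(UNIV::'n set). G l (tt (pos i + 1)) - G l (tt (pos i)))"
      unfolding tel .
  qed
  have swap: "(\<Sum>i\<in>UNIV. s i * (D a b (tt (pos i + 1)) - D a b (tt (pos i))))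
      = (\<Sum>l\<in>UNIV. \<Sum>i\<in>UNIV. s i * (G l (tt (pos i + 1)) - G l (tt (pos i))))"
  proof -
    have "(\<Sum>i\<in>UNIV. s i * (D a b (tt (pos i + 1)) - D a b (tt (pos i))))
        = (\<Sum>i\<in>UNIV. \<Sum>l\<in>UNIV. s i * (G l (tt (pos i + 1)) - G l (tt (pos i))))"
    proof (rule sum.cong[OF refl])
      fix i
      show "s i * (D a b (tt (pos i + 1)) - D a b (tt (pos i))) = (\<Sum>l\<in>UNIV. s i * (G l (tt (pos i + 1)) - G l (tt (pos i))))"
        unfolding DG sum_subtractf[symmetric] sum_distrib_left ..
    qed
    also have "\<dots> = (\<Sum>l\<in>UNIV. \<Sum>i\<in>UNIV. s i * (G l (tt (pos i + 1)) - G l (tt (pos i))))"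
      by (rule sum.swap)
    finally show ?thesis .
  qed
  have A: "(\<Sum>l\<in>UNIV. c * \<bar>b $ l - a $ l\<bar>) \<le> (\<Sum>i\<in>UNIV. s i * (D a b (tt (pos i + 1)) - D a b (tt (pos i))))"
    unfolding swap by (rule sum_mono) (rule mainl)
  have B: "(\<Sum>i\<in>(UNIV::'n set). - (2 * \<epsilon>)) \<le> (\<Sum>i\<in>UNIV. s i * (\<eta> (pos i + 1) - \<eta> (pos i)))"
    by (rule sum_mono) (rule err)
  have C: "(\<Sum>i\<in>UNIV. s i * (Phi J K b $ i - Phi J K a $ i)) \<le> (\<Sum>i\<in>UNIV. \<bar>Phi J K b $ i - Phi J K a $ i\<bar>)"
  proof (rule sum_mono)
    fix i
    have "\<bar>s i * (Phi J K b $ i - Phi J K a $ i)\<bar> \<le> \<bar>Phi J K b $ i - Phi J K a $ i\<bar>"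
      using s1[of i] by (simp add: abs_mult mult_left_le_one_le)
    then show "s i * (Phi J K b $ i - Phi J K a $ i) \<le> \<bar>Phi J K b $ i - Phi J K a $ i\<bar>" by simp
  qed
  have E: "(\<Sum>i\<in>UNIV. s i * (Phi J K b $ i - Phi J K a $ i)) =
      (\<Sum>i\<in>UNIV. s i * (D a b (tt (pos i + 1)) - D a b (tt (pos i)))) + (\<Sum>i\<in>UNIV. s i * (\<eta> (pos i + 1) - \<eta> (pos i)))"
    unfolding split by (simp add: sum.distrib)
  have F: "(\<Sum>l\<in>UNIV. c * \<bar>b $ l - a $ l\<bar>) = c * (\<Sum>l\<in>UNIV. \<bar>b $ l - a $ l\<bar>)" by (simp add: sum_distrib_left)
  have G': "(\<Sum>i\<in>(UNIV::'n set). - (2 * \<epsilon>)) = - (2 * real CARD('n) * \<epsilon>)" by simp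
  show "c * (\<Sum>l\<in>UNIV. \<bar>b $ l - a $ l\<bar>) \<le> (\<Sum>i\<in>UNIV. \<bar>Phi J K b $ i - Phi J K a $ i\<bar>) + 2 * real CARD('n) * \<epsilon>"
    using A B C E F G' by linarith
qed

lemma inv_bound:
  assumes a: "a \<in> ball y r" and b: "b \<in> ball y r"
  shows "dist b a \<le> (real CARD('n) / c) * dist (Phi J K b) (Phi J K a)"
proof -
  have "norm (b - a) \<le> (\<Sum>i\<in>UNIV. \<bar>(b - a) $ i\<bar>)" by (rule norm_le_l1_cart)
  then have n1: "c * norm (b - a) \<le> c * (\<Sum>l\<in>UNIV. \<bar>b $ l - a $ l\<bar>)" using c by simp
  have "(\<Sum>i\<in>UNIV. \<bar>Phi J K b $ i - Phi J K a $ i\<bar>) \<le> real CARD('n) * norm (Phi J K b - Phi J K a)"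
    using sum_abs_le_norm[of "Phi J K b - Phi J K a"] by simp
  with lower[OF a b] n1 have "c * norm (b - a) \<le> real CARD('n) * norm (Phi J K b - Phi J K a)" by linarith
  then show ?thesis using c by (simp add: dist_norm field_simps)
qed

end

context main begin

lemma final:
  "\<exists>U V. open U \<and> y \<in> U \<and> U \<subseteq> Y_set J K \<and> open V \<and> Phi J K y \<in> V \<and>
           (\<exists>g. homeomorphism U V (Phi J K) g \<and>
                (\<exists>L. L-lipschitz_on U (Phi J K)) \<and> (\<exists>L. L-lipschitz_on V g))"
proof -
  define U where "U = ball y r"
  have oU: "open U" unfolding U_def by simp
  have yU: "y \<in> U" unfolding U_def using r0 by simp
  have UY: "U \<subseteq> Y_set J K"
  proof
    fix a assume a: "a \<in> U"
    have "mval J K a j \<noteq> -\<infinity>" if "j \<le> CARD('n)" for j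
      using Lb[of a j] a that unfolding U_def by auto
    then show "a \<in> Y_set J K" using rS[of a] a unfolding U_def Y_set_def by auto
  qed
  have lip: "(2 * real CARD('n) * real CARD('n) * Lip)-lipschitz_on U (Phi J K)"
  proof (rule lipschitz_onI)
    fix a b assume "a \<in> U" "b \<in> U"
    then show "dist (Phi J K a) (Phi J K b) \<le> (2 * real CARD('n) * real CARD('n) * Lip) * dist a b"
      using upper[of b a] unfolding U_def by simp
  next
    show "0 \<le> 2 * real CARD('n) * real CARD('n) * Lip" using Lip0 by simp
  qed
  have cont: "continuous_on U (Phi J K)" by (rule lipschitz_on_continuous_on[OF lip])
  have inj: "inj_on (Phi J K) U"
  proof (rule inj_onI)
    fix a b assume ab: "a \<in> U" "b \<in> U" "Phi J K a = Phi J K b"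
    have "dist b a \<le> (real CARD('n) / c) * dist (Phi J K b) (Phi J K a)"
      using inv_bound[of a b] ab unfolding U_def by simp
    then show "a = b" using ab(3) by simp
  qed
  obtain g where hom: "homeomorphism U (Phi J K ` U) (Phi J K) g"
    using invariance_of_domain_homeomorphism[OF oU cont _ inj] by auto
  have oV: "open (Phi J K ` U)" by (rule invariance_of_domain[OF cont oU inj])
  have lipg: "(real CARD('n) / c)-lipschitz_on (Phi J K ` U) g"
  proof (rule lipschitz_onI)
    fix v w assume "v \<in> Phi J K ` U" "w \<in> Phi J K ` U"
    then obtain a b where ab: "a \<in> U" "b \<in> U" "v = Phi J K a" "w = Phi J K b" by auto
    have ga: "g v = a" "g w = b" using hom ab unfolding homeomorphism_def by auto
    show "dist (g v) (g w) \<le> (real CARD('n) / c) * dist v w"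
      using inv_bound[of b a] ab ga unfolding U_def by simp
  next
    show "0 \<le> real CARD('n) / c" using c by simp
  qed
  show ?thesis
    using oU yU UY oV hom lip lipg by blast
qed

end

lemma MK_exists:
  fixes K :: "'n::{finite,linorder} \<Rightarrow> real \<Rightarrow> real"
  assumes kf: "\<And>i. kernel_function (K i)"
  shows "\<exists>MK\<ge>0. \<forall>i s. s \<in> Om \<longrightarrow> K i s \<le> MK"
proof -
  have "\<exists>M\<ge>0. \<forall>s\<in>Om. K i s \<le> M" for i
  proof -
    have cr: "concave_on {0<..<1} (K i)" and cl: "concave_on {-1<..<0} (K i)"
      using kf[of i] unfolding kernel_function_def by auto
    obtain M1 where M1: "\<forall>t\<in>{0<..<1}. K i t \<le> M1" using concave_bdd_above[OF cr] by auto
    obtain M2 where M2: "\<forall>t\<in>{-1<..<0}. K i t \<le> M2" using concave_bdd_above[OF cl] by auto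
    have "\<forall>s\<in>Om. K i s \<le> \<bar>M1\<bar> + \<bar>M2\<bar>"
    proof
      fix s assume "s \<in> Om"
      then have "s \<in> {0<..<1} \<or> s \<in> {-1<..<0}" unfolding Om_def by auto
      then show "K i s \<le> \<bar>M1\<bar> + \<bar>M2\<bar>"
      proof
        assume "s \<in> {0<..<1}"
        then have "K i s \<le> M1" using M1 by auto
        then show ?thesis using abs_ge_self[of M1] abs_ge_zero[of M2] by linarith
      next
        assume "s \<in> {-1<..<0}"
        then have "K i s \<le> M2" using M2 by auto
        then show ?thesis using abs_ge_self[of M2] abs_ge_zero[of M1] by linarith
      qed
    qed
    moreover have "0 \<le> \<bar>M1\<bar> + \<bar>M2\<bar>" by simp
    ultimately show ?thesis by blast
  qed
  then obtain Mf where Mf: "\<And>i. Mf i \<ge> 0" "\<And>i s. s \<in> Om \<Longrightarrow> K i s \<le> Mf i" by metis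
  define MK where "MK = (\<Sum>i\<in>UNIV. Mf i)"
  have "Mf i \<le> MK" for i unfolding MK_def by (rule member_le_sum) (use Mf in auto)
  moreover have "0 \<le> MK" unfolding MK_def by (rule sum_nonneg) (use Mf in auto)
  ultimately show ?thesis using Mf by (meson order_trans)
qed

theorem proposition6p1:
  fixes K :: "'n::{finite,linorder} \<Rightarrow> real \<Rightarrow> real"
    and J :: "real \<Rightarrow> ereal"
    and c :: real
    and y :: "real ^ 'n::{finite,linorder}"
  assumes "c > 0"
    and "\<And>i. kernel_function (K i) \<and> singular_kernel (K i) \<and> PM c (K i)"
    and "n_field CARD('n) J"
    and "y \<in> Y_set J K"
  shows "\<exists>U V. open U \<and> y \<in> U \<and> U \<subseteq> Y_set J K \<and> open V \<and> Phi J K y \<in> V \<and>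
           (\<exists>g. homeomorphism U V (Phi J K) g \<and>
                (\<exists>L. L-lipschitz_on U (Phi J K)) \<and> (\<exists>L. L-lipschitz_on V g))"
proof -
  note c = assms(1) and ker = assms(2) and nf = assms(3) and yY = assms(4)
  obtain MJ where MJ: "\<forall>t\<in>{0..1}. J t \<le> ereal MJ" using nf unfolding n_field_def by auto
  obtain MK where MK: "MK \<ge> 0" "\<forall>i s. s \<in> Om \<longrightarrow> K i s \<le> MK"
    using MK_exists[of K] ker by blast
  interpret B: base K J c y MJ MK
    by unfold_locales (use c ker yY MJ MK in auto)
  obtain L where Lev: "eventually (\<lambda>a. \<forall>j\<le>CARD('n). ereal L \<le> mval J K a j) (nhds y)"
    using B.L_exists by blast
  obtain \<theta> where \<theta>: "\<theta> > 0" "eventually (\<lambda>a. \<forall>i. \<theta> < a $ i \<and> a $ i < 1 - \<theta>) (nhds y)"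
    using B.theta_nhds by blast
  obtain \<rho> where \<rho>: "\<rho> > 0" "\<forall>i s. s \<noteq> 0 \<and> \<bar>s\<bar> < \<rho> \<longrightarrow> K i s < L - 2 - MJ - real CARD('n) * MK"
    using B.Klim by blast
  have "eventually (\<lambda>a. (\<forall>j\<le>CARD('n). ereal L \<le> mval J K a j) \<and> a \<in> S_set \<and>
      (\<forall>i. \<theta> < a $ i \<and> a $ i < 1 - \<theta>)) (nhds y)"
    using Lev B.S_nhds \<theta>(2) by (auto intro: eventually_conj)
  then obtain r0 where r0: "r0 > 0" "\<And>a. dist a y < r0 \<Longrightarrow> (\<forall>j\<le>CARD('n). ereal L \<le> mval J K a j) \<and> a \<in> S_set \<and>
      (\<forall>i. \<theta> < a $ i \<and> a $ i < 1 - \<theta>)"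
    unfolding eventually_nhds_metric by blast
  define r where "r = min r0 (\<rho>/4)"
  have r: "r > 0" "r \<le> \<rho>/4" "r \<le> r0" using r0 \<rho> by (auto simp: r_def)
  have inball: "dist a y < r0" if "a \<in> ball y r" for a using that r by (simp add: dist_commute)
  have "\<exists>L1\<ge>0. \<forall>x\<in>{\<rho>/4..1-\<theta>}. \<forall>x'\<in>{\<rho>/4..1-\<theta>}. \<bar>K i x - K i x'\<bar> \<le> L1 * \<bar>x - x'\<bar>" for i
    by (rule concave_lipschitz[OF B.cr]) (use \<rho> \<theta> in auto)
  then obtain L1 where L1: "\<And>i. L1 i \<ge> 0" "\<And>i x x'. x\<in>{\<rho>/4..1-\<theta>} \<Longrightarrow> x'\<in>{\<rho>/4..1-\<theta>} \<Longrightarrow> \<bar>K i x - K i x'\<bar> \<le> L1 i * \<bar>x - x'\<bar>"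
    by metis
  have "\<exists>L2\<ge>0. \<forall>x\<in>{-(1-\<theta>)..-(\<rho>/4)}. \<forall>x'\<in>{-(1-\<theta>)..-(\<rho>/4)}. \<bar>K i x - K i x'\<bar> \<le> L2 * \<bar>x - x'\<bar>" for i
    by (rule concave_lipschitz[OF B.cl]) (use \<rho> \<theta> in auto)
  then obtain L2 where L2: "\<And>i. L2 i \<ge> 0" "\<And>i x x'. x\<in>{-(1-\<theta>)..-(\<rho>/4)} \<Longrightarrow> x'\<in>{-(1-\<theta>)..-(\<rho>/4)} \<Longrightarrow> \<bar>K i x - K i x'\<bar> \<le> L2 i * \<bar>x - x'\<bar>"
    by metis
  define Lip where "Lip = (\<Sum>i\<in>UNIV. L1 i + L2 i)"
  have Lip0: "Lip \<ge> 0" unfolding Lip_def by (rule sum_nonneg) (use L1 L2 in auto)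
  have L1L: "L1 i \<le> Lip" and L2L: "L2 i \<le> Lip" for i
  proof -
    have "L1 i + L2 i \<le> Lip" unfolding Lip_def by (rule member_le_sum) (use L1 L2 in auto)
    then show "L1 i \<le> Lip" "L2 i \<le> Lip" using L1(1)[of i] L2(1)[of i] by auto
  qed
  interpret Mn: main K J c y MJ MK L \<rho> r \<theta> Lip
  proof unfold_locales
    show "\<And>a j. a \<in> ball y r \<Longrightarrow> j \<le> CARD('n) \<Longrightarrow> ereal L \<le> mval J K a j" using inball r0(2) by blast
    show "\<rho> > 0" by (rule \<rho>(1))
    show "\<forall>i s. s \<noteq> 0 \<and> \<bar>s\<bar> < \<rho> \<longrightarrow> K i s < L - 2 - MJ - real CARD('n) * MK" by (rule \<rho>(2))
    show "r > 0" "r \<le> \<rho>/4" using r by auto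
    show "\<And>a. a \<in> ball y r \<Longrightarrow> a \<in> S_set" using inball r0(2) by blast
    show "\<theta> > 0" by (rule \<theta>(1))
    show "\<And>a i. a \<in> ball y r \<Longrightarrow> \<theta> < a $ i \<and> a $ i < 1 - \<theta>" using inball r0(2) by blast
    show "Lip \<ge> 0" by (rule Lip0)
    show "\<And>i x x'. x \<in> {\<rho>/4..1-\<theta>} \<Longrightarrow> x' \<in> {\<rho>/4..1-\<theta>} \<Longrightarrow> \<bar>K i x - K i x'\<bar> \<le> Lip * \<bar>x - x'\<bar>"
    proof -
      fix i x x' assume xx: "x \<in> {\<rho>/4..1-\<theta>}" "x' \<in> {\<rho>/4..1-\<theta>}"
      have "L1 i * \<bar>x - x'\<bar> \<le> Lip * \<bar>x - x'\<bar>" using L1L[of i] by (simp add: mult_right_mono)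
      then show "\<bar>K i x - K i x'\<bar> \<le> Lip * \<bar>x - x'\<bar>" using L1(2)[OF xx, of i] by linarith
    qed
    show "\<And>i x x'. x \<in> {-(1-\<theta>)..-(\<rho>/4)} \<Longrightarrow> x' \<in> {-(1-\<theta>)..-(\<rho>/4)} \<Longrightarrow> \<bar>K i x - K i x'\<bar> \<le> Lip * \<bar>x - x'\<bar>"
    proof -
      fix i x x' assume xx: "x \<in> {-(1-\<theta>)..-(\<rho>/4)}" "x' \<in> {-(1-\<theta>)..-(\<rho>/4)}"
      have "L2 i * \<bar>x - x'\<bar> \<le> Lip * \<bar>x - x'\<bar>" using L2L[of i] by (simp add: mult_right_mono)
      then show "\<bar>K i x - K i x'\<bar> \<le> Lip * \<bar>x - x'\<bar>" using L2(2)[OF xx, of i] by linarith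
    qed
  qed
  show ?thesis by (rule Mn.final)
qed

end
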